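(* Let $d\ge1$ and let $\Omega\subset\mathbb R^d$ be a regular set with $\mu_d(\Omega)>0$. Let $f:\Omega\to\mathbb R$ be bounded and continuous almost everywhere on $\Omega$, with $\mathcal{ER}(f)=[\inf_\Omega f,\sup_\Omega f]$. Take any closed $d$-dimensional rectangle $[\mathbf a,\mathbf b]$ containing $\Omega$, any sequence of $d$-indices $\mathbf n=\mathbf n(n)\in\mathbb N^d$ with $\mathbf n\to\infty$ as $n\to\infty$, and any asymptotically uniform grid $\mathcal G_{\mathbf n}^{(n)}=\{\mathbf x_{\mathbf i,\mathbf n}^{(n)}\}_{\mathbf i=\mathbf 1,\ldots,\mathbf n}$ in $[\mathbf a,\mathbf b]$. For every $n$ define $\mathcal I_{\mathbf n}^{(n)}(\Omega)=\{\mathbf i\in\{\mathbf 1,\ldots,\mathbf n\}:\mathbf x_{\mathbf i,\mathbf n}^{(n)}\in\Omega\}$, consider the multiset of samples $\{f(\mathbf x_{\mathbf i,\mathbf n}^{(n)}):\mathbf i\in\mathcal I_{\mathbf n}^{(n)}(\Omega)\}$ and a multiset of $|\mathcal I_{\mathbf n}^{(n)}(\Omega)|$ real numbers $\{\lambda_{\mathbf i,\mathbf n}^{(n)}:\mathbf i\in\mathcal I_{\mathbf n}^{(n)}(\Omega)\}$ such that: (i) the sequence of multisets $\{\{\lambda_{\mathbf i,\mathbf n}^{(n)}:\mathbf i\in\mathcal I_{\mathbf n}^{(n)}(\Omega)\}\}_n$ has an asymptotic distribution described by $f$; (ii) $\{\lambda_{\mathbf i,\mathbf n}^{(n)}:\mathbf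 i\in\mathcal I_{\mathbf n}^{(n)}(\Omega)\}\subseteq[\inf_\Omega f-\epsilon_n,\sup_\Omega f+\epsilon_n]$ for every $n$, for some sequence $\epsilon_n\to0$. Then, if $\sigma_n$ and $\tau_n$ are permutations of $\mathcal I_{\mathbf n}^{(n)}(\Omega)$ such that the vectors $[f(\mathbf x_{\sigma_n(\mathbf i),\mathbf n}^{(n)})]_{\mathbf i\in\mathcal I_{\mathbf n}^{(n)}(\Omega)}$ and $[\lambda_{\tau_n(\mathbf i),\mathbf n}^{(n)}]_{\mathbf i\in\mathcal I_{\mathbf n}^{(n)}(\Omega)}$ are sorted in increasing order (indices $\mathbf i$ taken in lexicographic order), we have $$\max_{\mathbf i\in\mathcal I_{\mathbf n}^{(n)}(\Omega)}|f(\mathbf x_{\sigma_n(\mathbf i),\mathbf n}^{(n)})-\lambda_{\tau_n(\mathbf i),\mathbf n}^{(n)}|\to0\quad(n\to\infty).$$ In particular, $\min_\tau\max_{\mathbf i\in\mathcal I_{\mathbf n}^{(n)}(\Omega)}|f(\mathbf x_{\mathbf i,\mathbf n}^{(n)})-\lambda_{\tau(\mathbf i),\mathbf n}^{(n)}|\to0$ as $n\to\infty$, where the minimum is over all permutations $\tau$ of $\mathcal I_{\mathbf n}^{(n)}(\Omega)$.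
   Context: $\mu_d$ is Lebesgue measure on $\mathbb R^d$. A set $\Omega\subset\mathbb R^d$ is regular if it is bounded and $\mu_d(\partial\Omega)=0$. For measurable $f:\Omega\to\mathbb C$, the essential range is $\mathcal{ER}(f)=\{z\in\mathbb C:\mu_d\{\mathbf x\in\Omega: |f(\mathbf x)-z|<\epsilon\}>0\ \forall\epsilon>0\}$. Multi-index notation: for $\mathbf n\in\mathbb N^d$, $\mathbf n\to\infty$ means $\min_j n_j\to\infty$; $\{\mathbf 1,\ldots,\mathbf n\}=\{\mathbf i\in\mathbb Z^d:\mathbf 1\le\mathbf i\le\mathbf n\}$ componentwise, ordered lexicographically; operations like $\mathbf i(\mathbf b-\mathbf a)/\mathbf n$ are componentwise. A family $\mathcal G_{\mathbf n}^{(n)}=\{\mathbf x_{\mathbf i,\mathbf n}^{(n)}\}_{\mathbf i=\mathbf 1,\ldots,\mathbf n}$ of points in $\mathbb R^d$ (not necessarily inside $[\mathbf a,\mathbf b]$) is an asymptotically uniform (a.u.) grid in $[\mathbf a,\mathbf b]$ if $\max_{\mathbf i=\mathbf 1,\ldots,\mathbf n}\|\mathbf x_{\mathbf i,\mathbf n}^{(n)}-(\mathbf a+\mathbf i(\mathbf b-\mathbf a)/\mathbf n)\|_\infty\to0$ as $n\to\infty$. A sequence of finite multisets of numbers $\{\Lambda_n=\{\lambda_{1,n},\ldots,\lambda_{d_n,n}\}\}_n$ with $d_n\to\infty$ has an asymptotic distribution described by a measurable $f:\Omega\subset\mathbb R^d\to\mathbb C$ with $0<\mu_d(\Omega)<\infty$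 if $\lim_{n\to\infty}\frac1{d_n}\sum_{i=1}^{d_n}F(\lambda_{i,n})=\frac1{\mu_d(\Omega)}\int_\Omega F(f(\mathbf x))\,d\mathbf x$ for every continuous $F:\mathbb C\to\mathbb C$ with bounded support. *)

theory Defs
  imports "HOL-Analysis.Analysis"
begin

definition multi_range :: "('d::finite \<Rightarrow> nat) \<Rightarrow> ('d \<Rightarrow> nat) set" where
  "multi_range N = {i. \<forall>k. 1 \<le> i k \<and> i k \<le> N k}"

definition lex_less :: "('d::{finite,wellorder} \<Rightarrow> nat) \<Rightarrow> ('d \<Rightarrow> nat) \<Rightarrow> bool" where
  "lex_less i j \<longleftrightarrow> (\<exists>k. i k < j k \<and> (\<forall>l<k. i l = j l))"

definition unif_point :: "real^'d \<Rightarrow> real^'d \<Rightarrow> ('d::finite \<Rightarrow> nat) \<Rightarrow> ('d \<Rightarrow> nat) \<Rightarrow> real^'d" where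
  "unif_point a b N i = (\<chi> k. a$k + real (i k) * (b$k - a$k) / real (N k))"

definition au_grid :: "(nat \<Rightarrow> ('d::finite \<Rightarrow> nat) \<Rightarrow> real^'d) \<Rightarrow> real^'d \<Rightarrow> real^'d
    \<Rightarrow> (nat \<Rightarrow> ('d \<Rightarrow> nat)) \<Rightarrow> bool" where
  "au_grid x a b N \<longleftrightarrow>
     ((\<lambda>n. Max ({0} \<union> {\<bar>x n i $ k - unif_point a b (N n) i $ k\<bar> | i k. i \<in> multi_range (N n)}))
        \<longlonglongrightarrow> 0)"

definition ess_range :: "('a::euclidean_space) set \<Rightarrow> ('a \<Rightarrow> real) \<Rightarrow> real set" where
  "ess_range \<Omega> f = {z. \<forall>e>0. emeasure lebesgue {x \<in> \<Omega>. \<bar>f x - z\<bar> < e} > 0}"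

definition has_asymp_distr ::
  "(nat \<Rightarrow> 'i set) \<Rightarrow> (nat \<Rightarrow> 'i \<Rightarrow> complex) \<Rightarrow> ('a::euclidean_space \<Rightarrow> complex) \<Rightarrow> 'a set \<Rightarrow> bool" where
  "has_asymp_distr A lam f \<Omega> \<longleftrightarrow>
     (\<forall>n. finite (A n)) \<and> filterlim (\<lambda>n. card (A n)) at_top sequentially \<and>
     (\<forall>F :: complex \<Rightarrow> complex. continuous_on UNIV F \<and> bounded {z. F z \<noteq> 0} \<longrightarrow>
        ((\<lambda>n. (\<Sum>i\<in>A n. F (lam n i)) / of_nat (card (A n)))
           \<longlonglongrightarrow> (set_lebesgue_integral lebesgue \<Omega> (\<lambda>x. F (f x))) / of_real (measure lebesgue \<Omega>)))"

end

theory Submission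
  imports Defs
begin

lemma lex_less_irrefl: "\<not> lex_less i i"
  unfolding lex_less_def by auto

lemma lex_less_trans:
  fixes i j l :: "'d::{finite,wellorder} \<Rightarrow> nat"
  assumes "lex_less i j" "lex_less j l" shows "lex_less i l"
proof -
  obtain k1 where k1: "i k1 < j k1" "\<forall>q<k1. i q = j q" using assms(1) unfolding lex_less_def by blast
  obtain k2 where k2: "j k2 < l k2" "\<forall>q<k2. j q = l q" using assms(2) unfolding lex_less_def by blast
  show ?thesis unfolding lex_less_def
  proof (cases "k1 \<le> k2")
    case True
    show "\<exists>k. i k < l k \<and> (\<forall>q<k. i q = l q)"
    proof (intro exI[of _ k1] conjI allI impI)
      show "i k1 < l k1" using k1 k2 True by (metis le_less order.strict_trans2)
      fix q assume "q < k1" then show "i q = l q" using k1 k2 True by auto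
    qed
  next
    case False
    show "\<exists>k. i k < l k \<and> (\<forall>q<k. i q = l q)"
    proof (intro exI[of _ k2] conjI allI impI)
      show "i k2 < l k2" using k1 k2 False by auto
      fix q assume "q < k2" then show "i q = l q" using k1 k2 False by auto
    qed
  qed
qed

lemma lex_less_total:
  fixes i j :: "'d::{finite,wellorder} \<Rightarrow> nat"
  assumes "i \<noteq> j" shows "lex_less i j \<or> lex_less j i"
proof -
  obtain k0 where "i k0 \<noteq> j k0" using assms by auto
  define k where "k = (LEAST k. i k \<noteq> j k)"
  have k: "i k \<noteq> j k" unfolding k_def by (rule LeastI) fact
  have lt: "\<forall>q<k. i q = j q" unfolding k_def using not_less_Least by blast
  show ?thesis unfolding lex_less_def
    using k lt by (metis linorder_neqE_nat)
qed

lemma count_lemma: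
  fixes R :: "'i \<Rightarrow> 'i \<Rightarrow> bool"
  assumes fin: "finite I"
    and irr: "\<And>i. \<not> R i i"
    and tot: "\<And>i j. i \<in> I \<Longrightarrow> j \<in> I \<Longrightarrow> i \<noteq> j \<Longrightarrow> R i j \<or> R j i"
    and monw: "\<And>i j. i \<in> I \<Longrightarrow> j \<in> I \<Longrightarrow> R i j \<Longrightarrow> w i \<le> w j"
    and monv: "\<And>i j. i \<in> I \<Longrightarrow> j \<in> I \<Longrightarrow> R i j \<Longrightarrow> v i \<le> (v j::real)"
    and i: "i \<in> I" and gap: "w i + D \<le> v i"
  shows "card {j\<in>I. v j < w i + D} < card {j\<in>I. w j \<le> w i}"
proof -
  have A: "{j\<in>I. v j < w i + D} \<subseteq> {j\<in>I. R j i}"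
  proof
    fix j assume j: "j \<in> {j\<in>I. v j < w i + D}"
    have "j \<noteq> i" using j gap by auto
    moreover have "\<not> R i j" using j gap monv[of i j] i by auto
    ultimately show "j \<in> {j\<in>I. R j i}" using tot[of i j] i j by auto
  qed
  have B: "insert i {j\<in>I. R j i} \<subseteq> {j\<in>I. w j \<le> w i}"
    using monw i by auto
  have "card {j\<in>I. v j < w i + D} \<le> card {j\<in>I. R j i}"
    using A fin by (intro card_mono) auto
  also have "\<dots> < card (insert i {j\<in>I. R j i})"
    using fin irr by (subst card_insert_disjoint) auto
  also have "\<dots> \<le> card {j\<in>I. w j \<le> w i}"
    using B fin by (intro card_mono) auto
  finally show ?thesis .
qed

lemma finite_max_elem:
  fixes R :: "'i \<Rightarrow> 'i \<Rightarrow> bool"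
  assumes "finite I" "I \<noteq> {}"
    and tr: "\<And>i j k. R i j \<Longrightarrow> R j k \<Longrightarrow> R i k"
    and irr: "\<And>i. \<not> R i i"
    and tot: "\<And>i j. i \<in> I \<Longrightarrow> j \<in> I \<Longrightarrow> i \<noteq> j \<Longrightarrow> R i j \<or> R j i"
  shows "\<exists>r\<in>I. \<forall>i\<in>I. i \<noteq> r \<longrightarrow> R i r"
  using assms(1,2,5)
proof (induction I rule: finite_ne_induct)
  case (singleton x) then show ?case by auto
next
  case (insert x F)
  then obtain r where r: "r \<in> F" "\<forall>i\<in>F. i \<noteq> r \<longrightarrow> R i r" by auto
  have "x \<noteq> r" using insert r by auto
  then have "R x r \<or> R r x" using insert.prems r by auto
  then show ?case
  proof
    assume "R x r" then show ?thesis using r by auto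
  next
    assume "R r x"
    have "\<forall>i\<in>insert x F. i \<noteq> x \<longrightarrow> R i x"
    proof (intro ballI impI)
      fix i assume "i \<in> insert x F" "i \<noteq> x"
      then have "i \<in> F" by auto
      show "R i x"
      proof (cases "i = r")
        case True then show ?thesis using \<open>R r x\<close> by simp
      next
        case False then show ?thesis using r \<open>i \<in> F\<close> \<open>R r x\<close> tr[of i r x] by auto
      qed
    qed
    then show ?thesis by auto
  qed
qed

lemma sorting_exists:
  fixes R :: "'i \<Rightarrow> 'i \<Rightarrow> bool" and w :: "'i \<Rightarrow> real"
  assumes "finite I"
    and tr: "\<And>i j k. R i j \<Longrightarrow> R j k \<Longrightarrow> R i k"
    and irr: "\<And>i. \<not> R i i"
    and tot: "\<And>i j. i \<in> I \<Longrightarrow> j \<in> I \<Longrightarrow> i \<noteq> j \<Longrightarrow> R i j \<or> R j i"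
  shows "\<exists>\<pi>. \<pi> permutes I \<and> (\<forall>i\<in>I. \<forall>j\<in>I. R i j \<longrightarrow> w (\<pi> i) \<le> w (\<pi> j))"
  using assms(1,4)
proof (induction "card I" arbitrary: I w)
  case 0
  then have "I = {}" by auto
  then show ?case by (intro exI[of _ id]) (auto simp: permutes_id)
next
  case (Suc c)
  have ne: "I \<noteq> {}" using Suc.hyps(2) by auto
  have "\<exists>r\<in>I. \<forall>i\<in>I. i \<noteq> r \<longrightarrow> R i r"
    apply (rule finite_max_elem[of I R])
        apply (rule Suc.prems(1))
       apply (rule ne)
      apply (erule (1) tr)
     apply (rule irr)
    apply (erule (2) Suc.prems(2))
    done
  then obtain r where r: "r \<in> I" "\<forall>i\<in>I. i \<noteq> r \<longrightarrow> R i r" by blast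
  have "Max (w ` I) \<in> w ` I" using Suc.prems(1) ne by (intro Max_in) auto
  then obtain q where q0: "q \<in> I" "w q = Max (w ` I)" by auto
  have q: "q \<in> I" "\<forall>i\<in>I. w i \<le> w q"
    using q0 Suc.prems(1) by auto
  define w' where "w' = w \<circ> Transposition.transpose q r"
  have "c = card (I - {r})" using Suc.hyps(2) Suc.prems(1) r by auto
  have "\<exists>\<pi>. \<pi> permutes (I - {r}) \<and> (\<forall>i\<in>I - {r}. \<forall>j\<in>I - {r}. R i j \<longrightarrow> w' (\<pi> i) \<le> w' (\<pi> j))"
  proof (rule Suc.hyps(1))
    show "c = card (I - {r})" by fact
    show "finite (I - {r})" using Suc.prems(1) by simp
    fix i j assume "i \<in> I - {r}" "j \<in> I - {r}" "i \<noteq> j"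
    then show "R i j \<or> R j i" using Suc.prems(2)[of i j] by simp
  qed
  then obtain \<pi>' where pi': "\<pi>' permutes (I - {r})"
    "\<forall>i\<in>I - {r}. \<forall>j\<in>I - {r}. R i j \<longrightarrow> w' (\<pi>' i) \<le> w' (\<pi>' j)" by blast
  define \<pi> where "\<pi> = Transposition.transpose q r \<circ> \<pi>'"
  have p1: "\<pi>' permutes I" using pi' permutes_subset by blast
  have p2: "Transposition.transpose q r permutes I" using q r by (simp add: permutes_swap_id)
  have perm: "\<pi> permutes I" unfolding \<pi>_def using p1 p2 by (rule permutes_compose)
  have pr: "\<pi>' r = r" using pi' by (meson DiffD2 permutes_not_in singletonI)
  have mon: "w (\<pi> i) \<le> w (\<pi> j)" if "i \<in> I" "j \<in> I" "R i j" for i j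
  proof (cases "j = r")
    case True
    then have "\<pi> j = q" unfolding \<pi>_def using pr by simp
    moreover have "\<pi> i \<in> I" using perm that by (simp add: permutes_in_image)
    ultimately show ?thesis using q by auto
  next
    case False
    have "i \<noteq> r"
    proof
      assume "i = r" then have "R j r" using r that False by auto
      then show False using tr[of r j r] irr[of r] \<open>R i j\<close> \<open>i = r\<close> by simp
    qed
    then have "i \<in> I - {r}" "j \<in> I - {r}" using that False by auto
    then have "w' (\<pi>' i) \<le> w' (\<pi>' j)" using pi'(2) \<open>R i j\<close> by blast
    then show ?thesis unfolding \<pi>_def w'_def by simp
  qed
  show ?case using perm mon by blast
qed

definition trap :: "real \<Rightarrow> real \<Rightarrow> real \<Rightarrow> real \<Rightarrow> real" where
  "trap lo hi r y = max 0 (min 1 (min ((y - lo + r) / r) ((hi + r - y) / r)))"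

lemma trap_cont: "r > 0 \<Longrightarrow> continuous_on UNIV (trap lo hi r)"
  unfolding trap_def by (intro continuous_intros) auto

lemma trap_isCont: "r > 0 \<Longrightarrow> isCont (trap lo hi r) y"
  using trap_cont continuous_on_eq_continuous_at by blast

lemma trap_bounds: "0 \<le> trap lo hi r y" "trap lo hi r y \<le> 1"
  unfolding trap_def by auto

lemma trap_one: "r > 0 \<Longrightarrow> lo \<le> y \<Longrightarrow> y \<le> hi \<Longrightarrow> trap lo hi r y = 1"
  unfolding trap_def by (auto simp: field_simps)

lemma trap_zero:
  assumes "r > 0" "y \<le> lo - r \<or> hi + r \<le> y" shows "trap lo hi r y = 0"
proof -
  have "(y - lo + r) / r \<le> 0 \<or> (hi + r - y) / r \<le> 0"
    using assms by (auto simp: divide_nonpos_pos)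
  then have "min 1 (min ((y - lo + r) / r) ((hi + r - y) / r)) \<le> 0" by linarith
  then show ?thesis unfolding trap_def by linarith
qed

lemma trap_support: "r > 0 \<Longrightarrow> {y. trap lo hi r y \<noteq> 0} \<subseteq> {lo - r .. hi + r}"
proof
  fix y assume "r > 0" "y \<in> {y. trap lo hi r y \<noteq> 0}"
  then show "y \<in> {lo - r .. hi + r}" using trap_zero[of r y lo hi] by force
qed

lemma trap_mono_hi: "r > 0 \<Longrightarrow> hi \<le> hi' \<Longrightarrow> trap lo hi r y \<le> trap lo hi' r y"
proof -
  assume "r > 0" "hi \<le> hi'"
  then have "(hi + r - y) / r \<le> (hi' + r - y) / r" by (intro divide_right_mono) auto
  then show ?thesis unfolding trap_def by linarith
qed

lemma trap_gap:
  assumes "r > 0" "lo \<le> t" "t + r/2 \<le> y" "y \<le> t + r"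
  shows "trap lo t r y + 1/2 \<le> trap lo (t + r) r y"
proof -
  have "trap lo (t + r) r y = 1" using assms by (intro trap_one) auto
  moreover have "trap lo t r y \<le> 1/2"
  proof -
    have "(t + r - y) / r \<le> 1/2" using assms by (simp add: field_simps)
    then show ?thesis unfolding trap_def by linarith
  qed
  ultimately show ?thesis by simp
qed

lemma card_filter_sum: "finite A \<Longrightarrow> real (card {x\<in>A. P x}) = (\<Sum>x\<in>A. if P x then 1 else 0)"
  by (simp add: sum.If_cases Int_def)

lemma count_step:
  fixes I :: "nat \<Rightarrow> 'i set" and W Z :: "nat \<Rightarrow> 'i \<Rightarrow> real"
  assumes fin: "\<And>n. finite (I n)"
   and eps: "\<epsilon> \<longlonglongrightarrow> 0"
   and bW: "\<And>n i. i \<in> I n \<Longrightarrow> m - \<epsilon> n \<le> W n i"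
   and limW: "\<And>lo hi r. r > 0 \<Longrightarrow> (\<lambda>n. (\<Sum>i\<in>I n. trap lo hi r (W n i)) / real (card (I n))) \<longlonglongrightarrow> L (trap lo hi r)"
   and limZ: "\<And>lo hi r. r > 0 \<Longrightarrow> (\<lambda>n. (\<Sum>i\<in>I n. trap lo hi r (Z n i)) / real (card (I n))) \<longlonglongrightarrow> L (trap lo hi r)"
   and gp: "L (trap (m-2) t (\<delta>/2)) < L (trap (m-2) (t+\<delta>/2) (\<delta>/2))"
   and \<delta>: "0 < \<delta>" and t: "m - 1 \<le> t"
  shows "eventually (\<lambda>n. card {j\<in>I n. W n j \<le> t} \<le> card {j\<in>I n. Z n j < t + \<delta>}) sequentially"
proof -
  define F1 where "F1 = trap (m-2) t (\<delta>/2)"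
  define F2 where "F2 = trap (m-2) (t+\<delta>/2) (\<delta>/2)"
  define A where "A n = (\<Sum>i\<in>I n. F1 (W n i)) / real (card (I n))" for n
  define B where "B n = (\<Sum>i\<in>I n. F2 (Z n i)) / real (card (I n))" for n
  have "(\<lambda>n. B n - A n) \<longlonglongrightarrow> L F2 - L F1"
    unfolding A_def B_def F1_def F2_def using \<delta> by (intro tendsto_diff limW limZ) auto
  moreover have "L F2 - L F1 > 0" using gp unfolding F1_def F2_def by simp
  ultimately have ev1: "eventually (\<lambda>n. B n - A n > 0) sequentially"
    by (rule order_tendstoD(1))
  have ev2: "eventually (\<lambda>n. \<epsilon> n < 1) sequentially"
    using eps by (rule order_tendstoD(2)) simp
  show ?thesis using ev1 ev2
  proof eventually_elim
    case (elim n)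
    show ?case
    proof (cases "card (I n) = 0")
      case True
      then have "I n = {}" using fin by auto
      then show ?thesis by simp
    next
      case False
      then have c: "real (card (I n)) > 0" by simp
      have s1: "real (card {j\<in>I n. W n j \<le> t}) \<le> (\<Sum>i\<in>I n. F1 (W n i))"
        unfolding card_filter_sum[OF fin]
      proof (rule sum_mono)
        fix i assume i: "i \<in> I n"
        show "(if W n i \<le> t then 1 else 0) \<le> F1 (W n i)"
        proof (cases "W n i \<le> t")
          case True
          have "m - 2 \<le> W n i" using bW[OF i] elim by linarith
          then have "F1 (W n i) = 1" unfolding F1_def using True \<delta> by (intro trap_one) auto
          then show ?thesis using True by simp
        next
          case False then show ?thesis unfolding F1_def using trap_bounds by simp
        qed
      qed
      have s2: "(\<Sum>i\<in>I n. F2 (Z n i)) \<le> real (card {j\<in>I n. Z n j < t + \<delta>})"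
        unfolding card_filter_sum[OF fin]
      proof (rule sum_mono)
        fix i assume i: "i \<in> I n"
        show "F2 (Z n i) \<le> (if Z n i < t + \<delta> then 1 else 0)"
        proof (cases "Z n i < t + \<delta>")
          case True then show ?thesis unfolding F2_def using trap_bounds by simp
        next
          case False
          then have "F2 (Z n i) = 0" unfolding F2_def using \<delta> by (intro trap_zero) auto
          then show ?thesis using False by simp
        qed
      qed
      have "A n < B n" using elim by simp
      then have "(\<Sum>i\<in>I n. F1 (W n i)) < (\<Sum>i\<in>I n. F2 (Z n i))"
        unfolding A_def B_def using c by (simp add: divide_strict_right_mono_neg divide_less_cancel)
      then show ?thesis using s1 s2 by linarith
    qed
  qed
qed

lemma one_side:
  fixes I :: "nat \<Rightarrow> 'i set" and W Z :: "nat \<Rightarrow> 'i \<Rightarrow> real" and R :: "'i \<Rightarrow> 'i \<Rightarrow> bool"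
  assumes fin: "\<And>n. finite (I n)"
   and irr: "\<And>i. \<not> R i i"
   and tot: "\<And>n i j. i \<in> I n \<Longrightarrow> j \<in> I n \<Longrightarrow> i \<noteq> j \<Longrightarrow> R i j \<or> R j i"
   and monW: "\<And>n i j. i \<in> I n \<Longrightarrow> j \<in> I n \<Longrightarrow> R i j \<Longrightarrow> W n i \<le> W n j"
   and monZ: "\<And>n i j. i \<in> I n \<Longrightarrow> j \<in> I n \<Longrightarrow> R i j \<Longrightarrow> Z n i \<le> Z n j"
   and eps: "\<epsilon> \<longlonglongrightarrow> 0"
   and bW: "\<And>n i. i \<in> I n \<Longrightarrow> m - \<epsilon> n \<le> W n i \<and> W n i \<le> M + \<epsilon> n"
   and bZ: "\<And>n i. i \<in> I n \<Longrightarrow> m - \<epsilon> n \<le> Z n i \<and> Z n i \<le> M + \<epsilon> n"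
   and limW: "\<And>lo hi r. r > 0 \<Longrightarrow> (\<lambda>n. (\<Sum>i\<in>I n. trap lo hi r (W n i)) / real (card (I n))) \<longlonglongrightarrow> L (trap lo hi r)"
   and limZ: "\<And>lo hi r. r > 0 \<Longrightarrow> (\<lambda>n. (\<Sum>i\<in>I n. trap lo hi r (Z n i)) / real (card (I n))) \<longlonglongrightarrow> L (trap lo hi r)"
   and gap: "\<And>t \<delta>. 0 < \<delta> \<Longrightarrow> \<delta> \<le> 1 \<Longrightarrow> m \<le> t + 3*\<delta>/8 \<Longrightarrow> t + 3*\<delta>/8 \<le> M \<Longrightarrow>
                L (trap (m-2) t (\<delta>/2)) < L (trap (m-2) (t+\<delta>/2) (\<delta>/2))"
   and \<delta>: "0 < \<delta>" "\<delta> \<le> 1"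
  shows "eventually (\<lambda>n. \<forall>i\<in>I n. Z n i < W n i + 3*\<delta>) sequentially"
proof -
  define K where "K = nat \<lceil>(M - m) / \<delta>\<rceil>"
  define tt where "tt j = m - 3*\<delta>/8 + real j * \<delta>" for j :: nat
  have evj: "eventually (\<lambda>n. \<forall>j\<in>{..K}. m + real j * \<delta> \<le> M \<longrightarrow>
      card {q\<in>I n. W n q \<le> tt j} \<le> card {q\<in>I n. Z n q < tt j + \<delta>}) sequentially"
  proof (rule eventually_ball_finite)
    show "finite {..K}" by simp
    show "\<forall>j\<in>{..K}. eventually (\<lambda>n. m + real j * \<delta> \<le> M \<longrightarrow>
      card {q\<in>I n. W n q \<le> tt j} \<le> card {q\<in>I n. Z n q < tt j + \<delta>}) sequentially"
    proof
      fix j assume "j \<in> {..K}"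
      show "eventually (\<lambda>n. m + real j * \<delta> \<le> M \<longrightarrow>
        card {q\<in>I n. W n q \<le> tt j} \<le> card {q\<in>I n. Z n q < tt j + \<delta>}) sequentially"
      proof (cases "m + real j * \<delta> \<le> M")
        case False then show ?thesis by simp
      next
        case True
        have "eventually (\<lambda>n. card {q\<in>I n. W n q \<le> tt j} \<le> card {q\<in>I n. Z n q < tt j + \<delta>}) sequentially"
        proof (rule count_step[where L=L and m=m and \<epsilon>=\<epsilon>])
          show "\<And>n. finite (I n)" by (rule fin)
          show "\<epsilon> \<longlonglongrightarrow> 0" by (rule eps)
          show "\<And>n i. i \<in> I n \<Longrightarrow> m - \<epsilon> n \<le> W n i" using bW by blast
          show "\<And>lo hi r. r > 0 \<Longrightarrow> (\<lambda>n. (\<Sum>i\<in>I n. trap lo hi r (W n i)) / real (card (I n))) \<longlonglongrightarrow> L (trap lo hi r)" by (rule limW)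
          show "\<And>lo hi r. r > 0 \<Longrightarrow> (\<lambda>n. (\<Sum>i\<in>I n. trap lo hi r (Z n i)) / real (card (I n))) \<longlonglongrightarrow> L (trap lo hi r)" by (rule limZ)
          show "L (trap (m-2) (tt j) (\<delta>/2)) < L (trap (m-2) (tt j+\<delta>/2) (\<delta>/2))"
            using True \<delta> by (intro gap) (auto simp: tt_def)
          show "0 < \<delta>" by (rule \<delta>)
          have "0 \<le> real j * \<delta>" using \<delta> by simp
          then show "m - 1 \<le> tt j" using \<delta> unfolding tt_def by linarith
        qed
        then show ?thesis by (rule eventually_mono) simp
      qed
    qed
  qed
  have eve: "eventually (\<lambda>n. \<bar>\<epsilon> n\<bar> < \<delta>/8) sequentially"
  proof -
    have "(\<lambda>n. \<bar>\<epsilon> n\<bar>) \<longlonglongrightarrow> 0" using eps by (rule tendsto_rabs_zero)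
    then show ?thesis by (rule order_tendstoD(2)) (use \<delta> in simp)
  qed
  show ?thesis using evj eve
  proof eventually_elim
    case (elim n)
    show ?case
    proof (rule ballI, rule ccontr)
      fix i assume i: "i \<in> I n" and neg: "\<not> Z n i < W n i + 3 * \<delta>"
      define s where "s = W n i"
      have sl: "m - \<delta>/8 < s" using bW[OF i] elim unfolding s_def by auto
      have su: "s \<le> M + \<delta>/8 - 3*\<delta>" using bZ[OF i] elim neg unfolding s_def by auto
      define q where "q = (s - m + 3*\<delta>/8) / \<delta>"
      have qpos: "q > 0" unfolding q_def using sl \<delta> by (auto intro!: divide_pos_pos)
      define j where "j = nat \<lceil>q\<rceil>"
      have rj: "real j = of_int \<lceil>q\<rceil>" unfolding j_def using qpos by auto
      have c1: "q \<le> real j" "real j < q + 1" using rj by linarith+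
      have tj1: "s \<le> tt j"
      proof -
        have "q * \<delta> \<le> real j * \<delta>" using c1 \<delta> by (intro mult_right_mono) auto
        moreover have "q * \<delta> = s - m + 3*\<delta>/8" unfolding q_def using \<delta> by simp
        ultimately show ?thesis unfolding tt_def by linarith
      qed
      have tj2: "tt j < s + \<delta>"
      proof -
        have "real j * \<delta> < (q + 1) * \<delta>" using c1 \<delta> by (intro mult_strict_right_mono) auto
        moreover have "(q + 1) * \<delta> = s - m + 3*\<delta>/8 + \<delta>" unfolding q_def using \<delta> by (simp add: field_simps)
        ultimately show ?thesis unfolding tt_def by linarith
      qed
      have jM: "m + real j * \<delta> \<le> M" using tj2 su \<delta> unfolding tt_def by linarith
      have jK: "j \<in> {..K}"
      proof -
        have "real j \<le> (M - m) / \<delta>" using jM \<delta> by (simp add: field_simps)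
        then have "real j \<le> of_int \<lceil>(M - m) / \<delta>\<rceil>" by linarith
        then have "int j \<le> \<lceil>(M - m) / \<delta>\<rceil>" by linarith
        then show ?thesis unfolding K_def by simp
      qed
      have cnt: "card {q\<in>I n. W n q \<le> tt j} \<le> card {q\<in>I n. Z n q < tt j + \<delta>}"
        using elim jK jM by blast
      have "card {q\<in>I n. Z n q < W n i + 3*\<delta>} < card {q\<in>I n. W n q \<le> W n i}"
      proof (rule count_lemma[where R=R])
        show "finite (I n)" by (rule fin)
        show "\<And>i. \<not> R i i" by (rule irr)
        show "\<And>i j. i \<in> I n \<Longrightarrow> j \<in> I n \<Longrightarrow> i \<noteq> j \<Longrightarrow> R i j \<or> R j i" by (rule tot)
        show "\<And>i j. i \<in> I n \<Longrightarrow> j \<in> I n \<Longrightarrow> R i j \<Longrightarrow> W n i \<le> W n j" by (rule monW)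
        show "\<And>i j. i \<in> I n \<Longrightarrow> j \<in> I n \<Longrightarrow> R i j \<Longrightarrow> Z n i \<le> Z n j" by (rule monZ)
        show "i \<in> I n" by (rule i)
        show "W n i + 3 * \<delta> \<le> Z n i" using neg by simp
      qed
      moreover have "card {q\<in>I n. W n q \<le> W n i} \<le> card {q\<in>I n. W n q \<le> tt j}"
        using tj1 fin unfolding s_def by (intro card_mono) auto
      moreover have "card {q\<in>I n. Z n q < tt j + \<delta>} \<le> card {q\<in>I n. Z n q < W n i + 3*\<delta>}"
        using tj2 \<delta> fin unfolding s_def by (intro card_mono) auto
      ultimately show False using cnt by linarith
    qed
  qed
qed

lemma sorted_match:
  fixes I :: "nat \<Rightarrow> 'i set" and U V :: "nat \<Rightarrow> 'i \<Rightarrow> real" and R :: "'i \<Rightarrow> 'i \<Rightarrow> bool"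
  assumes fin: "\<And>n. finite (I n)"
   and crd: "filterlim (\<lambda>n. card (I n)) at_top sequentially"
   and irr: "\<And>i. \<not> R i i"
   and tot: "\<And>n i j. i \<in> I n \<Longrightarrow> j \<in> I n \<Longrightarrow> i \<noteq> j \<Longrightarrow> R i j \<or> R j i"
   and monU: "\<And>n i j. i \<in> I n \<Longrightarrow> j \<in> I n \<Longrightarrow> R i j \<Longrightarrow> U n i \<le> U n j"
   and monV: "\<And>n i j. i \<in> I n \<Longrightarrow> j \<in> I n \<Longrightarrow> R i j \<Longrightarrow> V n i \<le> V n j"
   and eps: "\<epsilon> \<longlonglongrightarrow> 0"
   and bU: "\<And>n i. i \<in> I n \<Longrightarrow> m - \<epsilon> n \<le> U n i \<and> U n i \<le> M + \<epsilon> n"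
   and bV: "\<And>n i. i \<in> I n \<Longrightarrow> m - \<epsilon> n \<le> V n i \<and> V n i \<le> M + \<epsilon> n"
   and limU: "\<And>lo hi r. r > 0 \<Longrightarrow> (\<lambda>n. (\<Sum>i\<in>I n. trap lo hi r (U n i)) / real (card (I n))) \<longlonglongrightarrow> L (trap lo hi r)"
   and limV: "\<And>lo hi r. r > 0 \<Longrightarrow> (\<lambda>n. (\<Sum>i\<in>I n. trap lo hi r (V n i)) / real (card (I n))) \<longlonglongrightarrow> L (trap lo hi r)"
   and gap: "\<And>t \<delta>. 0 < \<delta> \<Longrightarrow> \<delta> \<le> 1 \<Longrightarrow> m \<le> t + 3*\<delta>/8 \<Longrightarrow> t + 3*\<delta>/8 \<le> M \<Longrightarrow>
                L (trap (m-2) t (\<delta>/2)) < L (trap (m-2) (t+\<delta>/2) (\<delta>/2))"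
  shows "(\<lambda>n. Max {\<bar>U n i - V n i\<bar> | i. i \<in> I n}) \<longlonglongrightarrow> 0"
proof (rule tendstoI)
  fix e :: real assume e: "e > 0"
  define \<delta> where "\<delta> = min 1 (e/4)"
  have \<delta>: "0 < \<delta>" "\<delta> \<le> 1" "3 * \<delta> < e" using e unfolding \<delta>_def by auto
  have ev1: "eventually (\<lambda>n. \<forall>i\<in>I n. V n i < U n i + 3*\<delta>) sequentially"
    by (rule one_side[where R=R and \<epsilon>=\<epsilon> and m=m and M=M and L=L, OF fin irr tot monU monV eps bU bV limU limV gap \<delta>(1,2)])
  have ev2: "eventually (\<lambda>n. \<forall>i\<in>I n. U n i < V n i + 3*\<delta>) sequentially"
    by (rule one_side[where R=R and \<epsilon>=\<epsilon> and m=m and M=M and L=L, OF fin irr tot monV monU eps bV bU limV limU gap \<delta>(1,2)])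
  have ev3: "eventually (\<lambda>n. card (I n) \<ge> 1) sequentially"
    using crd by (simp add: filterlim_at_top)
  show "eventually (\<lambda>n. dist (Max {\<bar>U n i - V n i\<bar> | i. i \<in> I n}) 0 < e) sequentially"
    using ev1 ev2 ev3
  proof eventually_elim
    case (elim n)
    define S where "S = {\<bar>U n i - V n i\<bar> | i. i \<in> I n}"
    have Sfin: "finite S" unfolding S_def using fin[of n] by simp
    have Sne: "S \<noteq> {}" unfolding S_def using elim(3) by (auto simp: card_ge_0_finite)
    have "Max S \<in> S" using Sfin Sne by (rule Max_in)
    then obtain i where i: "i \<in> I n" "Max S = \<bar>U n i - V n i\<bar>" unfolding S_def by auto
    have "\<bar>U n i - V n i\<bar> < 3 * \<delta>" using elim(1,2) i(1) by fastforce
    then show ?case using i \<delta> unfolding S_def by simp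
  qed
qed

lemma ae_cont_measurable:
  fixes h :: "'a::euclidean_space \<Rightarrow> real"
  assumes "AE y in lebesgue. isCont h y"
  shows "h \<in> borel_measurable lebesgue"
proof -
  from assms obtain N0 where N0: "\<And>y. y \<in> space lebesgue - N0 \<Longrightarrow> isCont h y" "N0 \<in> null_sets lebesgue"
    by (rule AE_E3) blast
  have "continuous_on (-N0) h" using N0(1) by (intro continuous_at_imp_continuous_on) auto
  moreover have "-N0 \<in> sets lebesgue" using N0(2) by (simp add: Compl_in_sets_lebesgue null_setsD2)
  ultimately have "h \<in> borel_measurable (lebesgue_on (-N0))" by (rule continuous_imp_measurable_on_sets_lebesgue)
  then have "(\<lambda>x. if x \<in> -N0 then h x else 0) \<in> borel_measurable lebesgue"
    using \<open>-N0 \<in> sets lebesgue\<close> by (rule borel_measurable_if_I)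
  moreover have "AE x in lebesgue. (if x \<in> -N0 then h x else 0) = h x"
    using AE_not_in[OF N0(2)] by eventually_elim auto
  ultimately show ?thesis by (rule borel_measurable_AE)
qed

lemma ae_cont_Omega:
  fixes \<Omega> :: "'a::euclidean_space set" and f :: "'a \<Rightarrow> real" and F :: "real \<Rightarrow> real"
  assumes fr: "frontier \<Omega> \<in> null_sets lebesgue"
    and fc: "AE y in lebesgue. y \<in> \<Omega> \<longrightarrow> continuous (at y within \<Omega>) f"
    and Fc: "continuous_on UNIV F"
  shows "AE y in lebesgue. isCont (\<lambda>z. indicator \<Omega> z * F (f z)) y"
  using AE_not_in[OF fr] fc
proof eventually_elim
  case (elim y)
  show ?case
  proof (cases "y \<in> interior \<Omega>")
    case True
    then have yO: "y \<in> \<Omega>" using interior_subset by blast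
    have "isCont f y" using elim(2) yO at_within_interior[OF True] by simp
    moreover have "isCont F (f y)" using Fc continuous_on_eq_continuous_at by blast
    ultimately have c: "isCont (\<lambda>z. F (f z)) y" by (rule isCont_o2)
    have "eventually (\<lambda>z. z \<in> interior \<Omega>) (nhds y)"
      using True by (intro eventually_nhds_in_open) auto
    then have "eventually (\<lambda>z. indicator \<Omega> z * F (f z) = F (f z)) (nhds y)"
      by eventually_elim (use interior_subset in \<open>auto simp: indicator_def\<close>)
    then show ?thesis using c by (subst isCont_cong) auto
  next
    case False
    then have "y \<notin> closure \<Omega>" using elim(1) unfolding frontier_def by auto
    then have "eventually (\<lambda>z. z \<in> - closure \<Omega>) (nhds y)"
      by (intro eventually_nhds_in_open) auto
    then have "eventually (\<lambda>z. indicator \<Omega> z * F (f z) = 0) (nhds y)"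
      by eventually_elim (use closure_subset in \<open>auto simp: indicator_def\<close>)
    then have "isCont (\<lambda>z. indicator \<Omega> z * F (f z)) y = isCont (\<lambda>z. 0::real) y"
      by (rule isCont_cong)
    then show ?thesis by simp
  qed
qed

lemma measure_cbox_cart:
  fixes a b :: "real^'d"
  assumes "\<And>k. a$k \<le> b$k"
  shows "measure lebesgue (cbox a b) = (\<Prod>k\<in>UNIV. b$k - a$k)"
proof -
  have "cbox a b \<noteq> {}" using assms by (simp add: interval_ne_empty_cart)
  then show ?thesis using content_cbox_cart[of a b] by simp
qed

definition hstep :: "real^'d \<Rightarrow> real^'d \<Rightarrow> ('d \<Rightarrow> nat) \<Rightarrow> 'd \<Rightarrow> real" where
  "hstep a b N k = (b$k - a$k) / real (N k)"

definition idx :: "real^'d \<Rightarrow> real^'d \<Rightarrow> ('d \<Rightarrow> nat) \<Rightarrow> real^'d \<Rightarrow> ('d \<Rightarrow> nat)" where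
  "idx a b N y = (\<lambda>k. max 1 (nat \<lceil>(y$k - a$k) / hstep a b N k\<rceil>))"

definition cell :: "real^'d \<Rightarrow> real^'d \<Rightarrow> ('d::finite \<Rightarrow> nat) \<Rightarrow> ('d \<Rightarrow> nat) \<Rightarrow> (real^'d) set" where
  "cell a b N i = {y \<in> cbox a b. idx a b N y = i}"

definition lo_pt :: "real^'d \<Rightarrow> real^'d \<Rightarrow> ('d::finite \<Rightarrow> nat) \<Rightarrow> ('d \<Rightarrow> nat) \<Rightarrow> real^'d" where
  "lo_pt a b N i = (\<chi> k. a$k + (real (i k) - 1) * hstep a b N k)"

definition hi_pt :: "real^'d \<Rightarrow> real^'d \<Rightarrow> ('d::finite \<Rightarrow> nat) \<Rightarrow> ('d \<Rightarrow> nat) \<Rightarrow> real^'d" where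
  "hi_pt a b N i = (\<chi> k. a$k + real (i k) * hstep a b N k)"

lemma hi_pt_unif: "hi_pt a b N i = unif_point a b N i"
  unfolding hi_pt_def unif_point_def hstep_def by simp

lemma finite_multi_range: "finite (multi_range (N :: 'd::finite \<Rightarrow> nat))"
proof -
  have "multi_range N \<subseteq> PiE UNIV (\<lambda>k. {1..N k})"
    unfolding multi_range_def PiE_def Pi_def extensional_def by auto
  moreover have "finite (PiE (UNIV::'d set) (\<lambda>k. {1..N k}))" by (intro finite_PiE) auto
  ultimately show ?thesis by (rule finite_subset)
qed

context
  fixes a b :: "real^'d::finite" and N :: "'d \<Rightarrow> nat"
  assumes ab: "\<And>k. a$k < b$k" and Npos: "\<And>k. N k \<ge> 1"
begin

lemma hstep_pos: "hstep a b N k > 0"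
  unfolding hstep_def using ab[of k] Npos[of k] by auto

lemma idx_props:
  assumes y: "y \<in> cbox a b"
  shows "idx a b N y \<in> multi_range N" "y \<in> cbox (lo_pt a b N (idx a b N y)) (hi_pt a b N (idx a b N y))"
proof -
  have yk: "a$k \<le> y$k" "y$k \<le> b$k" for k using y by (auto simp: mem_box_cart)
  define q where "q k = (y$k - a$k) / hstep a b N k" for k
  have hpos: "hstep a b N k > 0" for k by (rule hstep_pos)
  have q0: "q k \<ge> 0" for k unfolding q_def using yk hpos by (simp add: divide_nonneg_pos)
  have qN: "q k \<le> real (N k)" for k
  proof -
    have "q k \<le> (b$k - a$k) / hstep a b N k"
      unfolding q_def using yk[of k] hpos[of k] by (intro divide_right_mono) auto
    also have "\<dots> = real (N k)" unfolding hstep_def using ab[of k] Npos[of k] by simp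
    finally show ?thesis .
  qed
  have idxk: "idx a b N y k = max 1 (nat \<lceil>q k\<rceil>)" for k unfolding idx_def q_def by simp
  show "idx a b N y \<in> multi_range N"
    unfolding multi_range_def
  proof (intro CollectI allI conjI)
    fix k
    show "1 \<le> idx a b N y k" unfolding idxk by simp
    have "\<lceil>q k\<rceil> \<le> int (N k)" using qN[of k] by (simp add: ceiling_le_iff)
    then have "nat \<lceil>q k\<rceil> \<le> N k" by (simp add: nat_le_iff)
    then show "idx a b N y k \<le> N k" unfolding idxk using Npos[of k] by (simp add: max_def)
  qed
  show "y \<in> cbox (lo_pt a b N (idx a b N y)) (hi_pt a b N (idx a b N y))"
    unfolding mem_box_cart lo_pt_def hi_pt_def
  proof (intro allI conjI)
    fix k
    let ?i = "idx a b N y k"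
    have h: "hstep a b N k > 0" by (rule hpos)
    have yq: "y$k = a$k + q k * hstep a b N k" unfolding q_def using h by simp
    show "(\<chi> k. a $ k + (real (idx a b N y k) - 1) * hstep a b N k) $ k \<le> y $ k"
    proof (cases "\<lceil>q k\<rceil> \<ge> 1")
      case True
      then have "1 \<le> nat \<lceil>q k\<rceil>" by linarith
      then have "?i = nat \<lceil>q k\<rceil>" unfolding idxk by (simp add: max_def)
      then have "real ?i = of_int \<lceil>q k\<rceil>" using True by simp
      then have "real ?i - 1 \<le> q k" by linarith
      then have "(real ?i - 1) * hstep a b N k \<le> q k * hstep a b N k" using h by (intro mult_right_mono) auto
      then show ?thesis using yq by simp
    next
      case False
      then have "?i = 1" unfolding idxk by auto
      then show ?thesis using yk[of k] by simp
    qed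
    show "y $ k \<le> (\<chi> k. a $ k + real (idx a b N y k) * hstep a b N k) $ k"
    proof -
      have "q k \<le> real ?i" unfolding idxk by (simp add: le_max_iff_disj) linarith
      then have "q k * hstep a b N k \<le> real ?i * hstep a b N k" using h by (intro mult_right_mono) auto
      then show ?thesis using yq by simp
    qed
  qed
qed

lemma cell_between:
  assumes i: "i \<in> multi_range N"
  shows "box (lo_pt a b N i) (hi_pt a b N i) \<subseteq> cell a b N i"
    "cell a b N i \<subseteq> cbox (lo_pt a b N i) (hi_pt a b N i)"
proof -
  show "cell a b N i \<subseteq> cbox (lo_pt a b N i) (hi_pt a b N i)"
    unfolding cell_def using idx_props(2) by auto
  show "box (lo_pt a b N i) (hi_pt a b N i) \<subseteq> cell a b N i"
  proof
    fix y assume y: "y \<in> box (lo_pt a b N i) (hi_pt a b N i)"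
    have ik: "1 \<le> i k" "i k \<le> N k" for k using i unfolding multi_range_def by auto
    have yk: "a$k + (real (i k) - 1) * hstep a b N k < y$k" "y$k < a$k + real (i k) * hstep a b N k" for k
      using y unfolding mem_box_cart lo_pt_def hi_pt_def by auto
    have h: "hstep a b N k > 0" for k by (rule hstep_pos)
    have ybk: "y$k \<le> b$k" for k
    proof -
      have "real (i k) * hstep a b N k \<le> real (N k) * hstep a b N k"
        using ik[of k] h[of k] by (intro mult_right_mono) auto
      also have "\<dots> = b$k - a$k" unfolding hstep_def using Npos[of k] by simp
      finally show ?thesis using yk(2)[of k] by simp
    qed
    have yak: "a$k \<le> y$k" for k
    proof -
      have "0 \<le> (real (i k) - 1) * hstep a b N k" using ik[of k] h[of k] by simp
      then show ?thesis using yk(1)[of k] by simp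
    qed
    have yC: "y \<in> cbox a b" using ybk yak by (simp add: mem_box_cart)
    have "idx a b N y k = i k" for k
    proof -
      define q where "q = (y$k - a$k) / hstep a b N k"
      have "real (i k) - 1 < q" unfolding q_def using yk(1)[of k] h[of k] by (simp add: field_simps)
      moreover have "q < real (i k)" unfolding q_def using yk(2)[of k] h[of k] by (simp add: field_simps)
      ultimately have "\<lceil>q\<rceil> = int (i k)" by (simp add: ceiling_eq_iff)
      then show ?thesis unfolding idx_def q_def[symmetric] using ik[of k] by simp
    qed
    then show "y \<in> cell a b N i" unfolding cell_def using yC by auto
  qed
qed

lemma cell_measure:
  assumes i: "i \<in> multi_range N"
  shows "cell a b N i \<in> sets lebesgue"
    "measure lebesgue (cell a b N i) = (\<Prod>k\<in>UNIV. hstep a b N k)"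
proof -
  let ?l = "lo_pt a b N i" and ?h = "hi_pt a b N i"
  have lh: "?l$k \<le> ?h$k" for k unfolding lo_pt_def hi_pt_def using hstep_pos[of k] by simp
  have nul: "cbox ?l ?h - box ?l ?h \<in> null_sets lebesgue"
    using negligible_frontier_interval negligible_iff_null_sets by blast
  have "cell a b N i - box ?l ?h \<subseteq> cbox ?l ?h - box ?l ?h" using cell_between[OF i] by auto
  then have n2: "cell a b N i - box ?l ?h \<in> null_sets lebesgue"
    using nul by (meson negligible_iff_null_sets negligible_subset)
  have eq: "cell a b N i = box ?l ?h \<union> (cell a b N i - box ?l ?h)" using cell_between[OF i] by auto
  have "box ?l ?h \<union> (cell a b N i - box ?l ?h) \<in> sets lebesgue"
    using n2 by (intro sets.Un) auto
  then show "cell a b N i \<in> sets lebesgue" using eq by metis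
  have "measure lebesgue (cell a b N i) = measure lebesgue (box ?l ?h)"
  proof -
    have "measure lebesgue (box ?l ?h \<union> (cell a b N i - box ?l ?h)) = measure lebesgue (box ?l ?h)"
      using n2 by (intro measure_Un_null_set) auto
    then show ?thesis using eq by metis
  qed
  also have "\<dots> = measure lebesgue (cbox ?l ?h)"
  proof -
    have e2: "box ?l ?h = cbox ?l ?h - (cbox ?l ?h - box ?l ?h)" using box_subset_cbox by blast
    have "measure lebesgue (cbox ?l ?h - (cbox ?l ?h - box ?l ?h)) = measure lebesgue (cbox ?l ?h)"
      using nul by (intro measure_Diff_null_set) auto
    then show ?thesis using e2 by metis
  qed
  also have "\<dots> = (\<Prod>k\<in>UNIV. ?h$k - ?l$k)" using lh by (rule measure_cbox_cart)
  also have "\<dots> = (\<Prod>k\<in>UNIV. hstep a b N k)" unfolding lo_pt_def hi_pt_def by (simp add: algebra_simps)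
  finally show "measure lebesgue (cell a b N i) = (\<Prod>k\<in>UNIV. hstep a b N k)" .
qed

lemma cellvol: "(\<Prod>k\<in>UNIV. hstep a b N k) = measure lebesgue (cbox a b) / real (\<Prod>k\<in>UNIV. N k)"
proof -
  have "measure lebesgue (cbox a b) = (\<Prod>k\<in>UNIV. b$k - a$k)"
    using ab by (intro measure_cbox_cart) (simp add: less_imp_le)
  then show ?thesis unfolding hstep_def by (simp add: prod_dividef)
qed

end

lemma cell_sum_eq:
  "(\<Sum>i\<in>multi_range N. indicator (cell a b N i) y * \<phi> i) =
     (if y \<in> cbox a b \<and> idx a b N y \<in> multi_range N then \<phi> (idx a b N y) else (0::real))"
proof (cases "y \<in> cbox a b")
  case True
  have "(\<Sum>i\<in>multi_range N. indicator (cell a b N i) y * \<phi> i) =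
        (\<Sum>i\<in>multi_range N. if idx a b N y = i then \<phi> i else 0)"
    using True by (intro sum.cong) (auto simp: cell_def indicator_def)
  also have "\<dots> = (if idx a b N y \<in> multi_range N then \<phi> (idx a b N y) else 0)"
    using finite_multi_range[of N] by (simp add: sum.delta')
  finally show ?thesis using True by simp
next
  case False
  then show ?thesis by (auto simp: cell_def indicator_def intro!: sum.neutral)
qed

lemma step_integral:
  fixes a b :: "real^'d::finite" and N :: "'d \<Rightarrow> nat"
  assumes ab: "\<And>k. a$k < b$k" and Npos: "\<And>k. N k \<ge> 1"
  shows "integrable lebesgue (\<lambda>y. \<Sum>i\<in>multi_range N. indicator (cell a b N i) y * \<phi> i)"
    "integral\<^sup>L lebesgue (\<lambda>y. \<Sum>i\<in>multi_range N. indicator (cell a b N i) y * \<phi> i)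
       = (\<Sum>i\<in>multi_range N. \<phi> i) * (measure lebesgue (cbox a b) / real (\<Prod>k\<in>UNIV. N k))"
proof -
  have cs: "cell a b N i \<in> sets lebesgue" "emeasure lebesgue (cell a b N i) < \<infinity>"
    if "i \<in> multi_range N" for i
  proof -
    show "cell a b N i \<in> sets lebesgue" using cell_measure[OF ab Npos that] by simp
    have "cell a b N i \<subseteq> cbox a b" unfolding cell_def by auto
    then have "emeasure lebesgue (cell a b N i) \<le> emeasure lebesgue (cbox a b)"
      by (intro emeasure_mono) auto
    also have "\<dots> < \<infinity>" using emeasure_lborel_cbox_finite[of a b] by simp
    finally show "emeasure lebesgue (cell a b N i) < \<infinity>" .
  qed
  have int: "integrable lebesgue (\<lambda>y. indicator (cell a b N i) y * \<phi> i)" if "i \<in> multi_range N" for i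
    using cs[OF that] by (intro integrable_mult_left) auto
  show "integrable lebesgue (\<lambda>y. \<Sum>i\<in>multi_range N. indicator (cell a b N i) y * \<phi> i)"
    using int by (intro Bochner_Integration.integrable_sum) auto
  have "integral\<^sup>L lebesgue (\<lambda>y. \<Sum>i\<in>multi_range N. indicator (cell a b N i) y * \<phi> i)
     = (\<Sum>i\<in>multi_range N. integral\<^sup>L lebesgue (\<lambda>y. indicator (cell a b N i) y * \<phi> i))"
    using int by (intro Bochner_Integration.integral_sum) auto
  also have "\<dots> = (\<Sum>i\<in>multi_range N. measure lebesgue (cell a b N i) * \<phi> i)"
    using cs by (intro sum.cong refl) auto
  also have "\<dots> = (\<Sum>i\<in>multi_range N. (measure lebesgue (cbox a b) / real (\<Prod>k\<in>UNIV. N k)) * \<phi> i)"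
    using cell_measure[OF ab Npos] cellvol[OF ab Npos] by (intro sum.cong refl) auto
  also have "\<dots> = (\<Sum>i\<in>multi_range N. \<phi> i) * (measure lebesgue (cbox a b) / real (\<Prod>k\<in>UNIV. N k))"
    by (simp only: sum_distrib_right mult.commute)
  finally show "integral\<^sup>L lebesgue (\<lambda>y. \<Sum>i\<in>multi_range N. indicator (cell a b N i) y * \<phi> i)
       = (\<Sum>i\<in>multi_range N. \<phi> i) * (measure lebesgue (cbox a b) / real (\<Prod>k\<in>UNIV. N k))" .
qed

lemma riemann:
  fixes a b :: "real^'d::finite" and N :: "nat \<Rightarrow> 'd \<Rightarrow> nat"
    and x :: "nat \<Rightarrow> ('d \<Rightarrow> nat) \<Rightarrow> real^'d" and g :: "real^'d \<Rightarrow> real"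
  assumes ab: "\<And>k. a$k < b$k"
   and Ninf: "filterlim (\<lambda>n. Min (range (N n))) at_top sequentially"
   and grid: "au_grid x a b N"
   and gm: "g \<in> borel_measurable lebesgue" and gb: "\<And>y. \<bar>g y\<bar> \<le> B"
   and gc: "AE y in lebesgue. isCont g y"
  shows "(\<lambda>n. (\<Sum>i\<in>multi_range (N n). g (x n i)) / real (\<Prod>k\<in>UNIV. N n k))
          \<longlonglongrightarrow> integral\<^sup>L lebesgue (\<lambda>y. indicator (cbox a b) y * g y) / measure lebesgue (cbox a b)"
proof -
  define C where "C = cbox a b"
  define V where "V = measure lebesgue C"
  have Vpos: "V > 0"
  proof -
    have "V = (\<Prod>k\<in>UNIV. b$k - a$k)" unfolding V_def C_def
      using ab by (intro measure_cbox_cart) (simp add: less_imp_le)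
    also have "\<dots> > 0" using ab by (intro prod_pos) (simp add: algebra_simps)
    finally show ?thesis .
  qed
  have B0: "B \<ge> 0" using gb[of 0] by linarith
  define J where "J = integral\<^sup>L lebesgue (\<lambda>y. indicator C y * g y)"
  define pos where "pos n \<longleftrightarrow> (\<forall>k. N n k \<ge> 1)" for n
  define mn where "mn n = real (Min (range (N n)))" for n
  have Min_le: "Min (range (N n)) \<le> N n k" for n k by (intro Min_le) auto
  have evpos: "eventually pos sequentially"
  proof -
    have "eventually (\<lambda>n. Min (range (N n)) \<ge> 1) sequentially"
      using Ninf by (simp add: filterlim_at_top)
    then show ?thesis unfolding pos_def by eventually_elim (use Min_le order_trans in blast)
  qed
  define \<eta> where "\<eta> n = Max ({0} \<union> {\<bar>x n i $ k - unif_point a b (N n) i $ k\<bar> | i k. i \<in> multi_range (N n)})" for n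
  have \<eta>0: "\<eta> \<longlonglongrightarrow> 0" using grid unfolding au_grid_def \<eta>_def .
  have \<eta>b: "\<bar>x n i $ k - unif_point a b (N n) i $ k\<bar> \<le> \<eta> n" if "i \<in> multi_range (N n)" for n i k
  proof -
    have fin: "finite {\<bar>x n i $ k - unif_point a b (N n) i $ k\<bar> | i k. i \<in> multi_range (N n)}"
    proof -
      have "{\<bar>x n i $ k - unif_point a b (N n) i $ k\<bar> | i k. i \<in> multi_range (N n)}
          = (\<lambda>(i,k). \<bar>x n i $ k - unif_point a b (N n) i $ k\<bar>) ` (multi_range (N n) \<times> UNIV)" by auto
      moreover have "finite (multi_range (N n) \<times> (UNIV::'d set))"
        using finite_multi_range by (intro finite_cartesian_product) auto
      ultimately show ?thesis by simp
    qed
    show ?thesis unfolding \<eta>_def using fin that by (intro Max_ge) auto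
  qed
  have mn_top: "filterlim mn at_top sequentially"
    unfolding mn_def by (rule filterlim_compose[OF filterlim_real_sequentially Ninf])
  define r where "r n = (\<Sum>k\<in>UNIV. \<eta> n + (b$k - a$k) / mn n)" for n
  have r0: "r \<longlonglongrightarrow> 0"
  proof -
    have "(\<lambda>n. \<Sum>k\<in>UNIV. \<eta> n + (b$k - a$k) / mn n) \<longlonglongrightarrow> (\<Sum>k\<in>(UNIV::'d set). 0 + 0)"
      by (intro tendsto_sum tendsto_add \<eta>0 real_tendsto_divide_at_top[OF tendsto_const mn_top])
    then show ?thesis unfolding r_def by simp
  qed
  have close: "dist (x n (idx a b (N n) y)) y \<le> r n" if pn: "pos n" and y: "y \<in> C" for n y
  proof -
    have Np: "\<And>k. N n k \<ge> 1" using pn unfolding pos_def by auto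
    let ?i = "idx a b (N n) y"
    have iR: "?i \<in> multi_range (N n)" and yb: "y \<in> cbox (lo_pt a b (N n) ?i) (hi_pt a b (N n) ?i)"
      using idx_props[OF ab Np] y unfolding C_def by auto
    have mpos: "mn n > 0" unfolding mn_def using Min_le[of n] Np
      by (metis Min_in UNIV_not_empty finite finite_imageI image_is_empty imageE of_nat_0_less_iff
          less_le_trans zero_less_one)
    have comp: "\<bar>x n ?i $ k - y $ k\<bar> \<le> \<eta> n + (b$k - a$k) / mn n" for k
    proof -
      have h1: "\<bar>x n ?i $ k - unif_point a b (N n) ?i $ k\<bar> \<le> \<eta> n" by (rule \<eta>b[OF iR])
      have yk: "lo_pt a b (N n) ?i $ k \<le> y $ k" "y $ k \<le> hi_pt a b (N n) ?i $ k"
        using yb by (auto simp: mem_box_cart)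
      have "hi_pt a b (N n) ?i $ k - lo_pt a b (N n) ?i $ k = hstep a b (N n) k"
        unfolding hi_pt_def lo_pt_def by (simp add: algebra_simps)
      then have h2: "\<bar>unif_point a b (N n) ?i $ k - y $ k\<bar> \<le> hstep a b (N n) k"
        using yk hi_pt_unif[of a b "N n" ?i] by auto
      have h3: "hstep a b (N n) k \<le> (b$k - a$k) / mn n"
        unfolding hstep_def mn_def using ab[of k] mpos Min_le[of n k]
        by (intro divide_left_mono) (auto simp: mn_def)
      show ?thesis using h1 h2 h3 by linarith
    qed
    have "dist (x n ?i) y = norm (x n ?i - y)" by (simp add: dist_norm)
    also have "\<dots> \<le> (\<Sum>k\<in>UNIV. \<bar>(x n ?i - y) $ k\<bar>)" by (rule norm_le_l1_cart)
    also have "\<dots> \<le> r n" unfolding r_def using comp by (intro sum_mono) simp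
    finally show ?thesis .
  qed
  define G where "G n y = (\<Sum>i\<in>multi_range (N n). indicator (cell a b (N n) i) y * g (x n i))" for n y
  have Geq: "G n y = (if y \<in> C \<and> idx a b (N n) y \<in> multi_range (N n) then g (x n (idx a b (N n) y)) else 0)" for n y
    unfolding G_def C_def by (rule cell_sum_eq)
  define D where "D n y = (if pos n then \<bar>G n y - indicator C y * g y\<bar> else 0)" for n y
  have Gm: "G n \<in> borel_measurable lebesgue" if "pos n" for n
  proof -
    have Np: "\<And>k. N n k \<ge> 1" using that unfolding pos_def by auto
    show ?thesis unfolding G_def
      by (intro borel_measurable_sum borel_measurable_times borel_measurable_const
          borel_measurable_indicator cell_measure(1)[OF ab Np])
  qed
  have Cm: "C \<in> sets lebesgue" unfolding C_def by simp
  have Dm: "D n \<in> borel_measurable lebesgue" for n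
  proof (cases "pos n")
    case True
    then show ?thesis unfolding D_def using Gm[OF True] Cm gm by simp
  next
    case False
    then show ?thesis unfolding D_def by simp
  qed
  have Dbound: "norm (D n y) \<le> indicator C y * (2 * B)" for n y
  proof (cases "y \<in> C")
    case True
    have "\<bar>G n y\<bar> \<le> B" using Geq[of n y] gb B0 by auto
    then show ?thesis unfolding D_def using True gb[of y] B0 by (auto simp: indicator_def)
  next
    case False
    then show ?thesis unfolding D_def using Geq[of n y] by (auto simp: indicator_def)
  qed
  have wint: "integrable lebesgue (\<lambda>y. indicator C y * (2 * B))"
  proof -
    have "emeasure lebesgue C < \<infinity>" unfolding C_def using emeasure_lborel_cbox_finite[of a b] by simp
    then show ?thesis using Cm by (intro integrable_mult_left) auto
  qed
  have Dlim: "AE y in lebesgue. (\<lambda>n. D n y) \<longlonglongrightarrow> 0"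
    using gc
  proof eventually_elim
    case (elim y)
    show ?case
    proof (cases "y \<in> C")
      case False
      then have "D n y = 0" for n unfolding D_def using Geq[of n y] by (auto simp: indicator_def)
      then show ?thesis by simp
    next
      case True
      have xl: "(\<lambda>n. x n (idx a b (N n) y)) \<longlonglongrightarrow> y"
      proof -
        have "(\<lambda>n. x n (idx a b (N n) y) - y) \<longlonglongrightarrow> 0"
        proof (rule Lim_null_comparison[OF _ r0])
          show "eventually (\<lambda>n. norm (x n (idx a b (N n) y) - y) \<le> r n) sequentially"
            using evpos by eventually_elim (use close True in \<open>auto simp: dist_norm\<close>)
        qed
        then show ?thesis by (rule LIM_zero_cancel)
      qed
      have "(\<lambda>n. g (x n (idx a b (N n) y))) \<longlonglongrightarrow> g y"
        using elim xl by (rule isCont_tendsto_compose)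
      then have l1: "(\<lambda>n. \<bar>g (x n (idx a b (N n) y)) - g y\<bar>) \<longlonglongrightarrow> \<bar>g y - g y\<bar>"
        by (intro tendsto_intros)
      have ev: "eventually (\<lambda>n. \<bar>g (x n (idx a b (N n) y)) - g y\<bar> = D n y) sequentially"
        using evpos
      proof eventually_elim
        case (elim n)
        then have Np: "\<And>k. N n k \<ge> 1" unfolding pos_def by auto
        have "idx a b (N n) y \<in> multi_range (N n)" using idx_props(1)[OF ab Np] True unfolding C_def by auto
        then show ?case unfolding D_def using elim True Geq[of n y] by simp
      qed
      show ?thesis using Lim_transform_eventually[OF l1 ev] by simp
    qed
  qed
  have Dbound': "\<And>n. AE y in lebesgue. norm (D n y) \<le> indicator C y * (2 * B)" using Dbound by simp
  have intD: "(\<lambda>n. integral\<^sup>L lebesgue (D n)) \<longlonglongrightarrow> 0"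
    using integral_dominated_convergence[OF borel_measurable_const Dm wint Dlim Dbound'] by simp
  have gint: "integrable lebesgue (\<lambda>y. indicator C y * g y)"
  proof (rule Bochner_Integration.integrable_bound[OF wint])
    show "(\<lambda>y. indicator C y * g y) \<in> borel_measurable lebesgue" using Cm gm by simp
    show "AE y in lebesgue. norm (indicator C y * g y) \<le> norm (indicator C y * (2 * B))"
    proof (rule AE_I2)
      fix y
      have "\<bar>g y\<bar> \<le> 2 * B" using gb[of y] B0 by linarith
      then show "norm (indicator C y * g y) \<le> norm (indicator C y * (2 * B))"
        using B0 by (auto simp: indicator_def)
    qed
  qed
  define S where "S n = (\<Sum>i\<in>multi_range (N n). g (x n i))" for n
  define P where "P n = real (\<Prod>k\<in>UNIV. N n k)" for n
  have main: "eventually (\<lambda>n. norm (S n / P n - J / V) \<le> integral\<^sup>L lebesgue (D n) / V) sequentially"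
    using evpos
  proof eventually_elim
    case (elim n)
    then have Np: "\<And>k. N n k \<ge> 1" unfolding pos_def by auto
    have Gi: "integrable lebesgue (G n)" unfolding G_def by (rule step_integral(1)[OF ab Np])
    have GI: "integral\<^sup>L lebesgue (G n) = S n * (V / P n)"
      unfolding G_def S_def P_def V_def C_def by (rule step_integral(2)[OF ab Np])
    have "(\<Prod>k\<in>UNIV. real (N n k)) > 0" using Np by (intro prod_pos) (simp add: Suc_le_eq)
    then have Ppos: "P n > 0" unfolding P_def by simp
    have "S n / P n - J / V = (S n * (V / P n) - J) / V"
      using Vpos Ppos by (simp add: diff_divide_distrib)
    also have "\<dots> = (integral\<^sup>L lebesgue (G n) - J) / V" unfolding GI ..
    also have "integral\<^sup>L lebesgue (G n) - J = integral\<^sup>L lebesgue (\<lambda>y. G n y - indicator C y * g y)"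
      unfolding J_def using Gi gint by simp
    finally have eq: "S n / P n - J / V = integral\<^sup>L lebesgue (\<lambda>y. G n y - indicator C y * g y) / V" .
    have "\<bar>integral\<^sup>L lebesgue (\<lambda>y. G n y - indicator C y * g y)\<bar> \<le> integral\<^sup>L lebesgue (D n)"
      unfolding D_def using elim integral_abs_bound[of lebesgue "\<lambda>y. G n y - indicator C y * g y"] by simp
    then have "\<bar>integral\<^sup>L lebesgue (\<lambda>y. G n y - indicator C y * g y)\<bar> / V \<le> integral\<^sup>L lebesgue (D n) / V"
      using Vpos by (intro divide_right_mono) auto
    moreover have "norm (S n / P n - J / V) = \<bar>integral\<^sup>L lebesgue (\<lambda>y. G n y - indicator C y * g y)\<bar> / V"
      unfolding eq using Vpos by simp
    ultimately show ?case by simp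
  qed
  have "(\<lambda>n. integral\<^sup>L lebesgue (D n) / V) \<longlonglongrightarrow> 0"
    using tendsto_divide[OF intD tendsto_const[of V]] Vpos by simp
  then have "(\<lambda>n. S n / P n - J / V) \<longlonglongrightarrow> 0" by (rule Lim_null_comparison[OF main])
  then have "(\<lambda>n. S n / P n) \<longlonglongrightarrow> J / V" by (rule LIM_zero_cancel)
  then show ?thesis unfolding S_def P_def J_def V_def C_def .
qed

lemma lam_lim:
  fixes \<Omega> :: "'a::euclidean_space set" and f :: "'a \<Rightarrow> real" and lam :: "nat \<Rightarrow> 'i \<Rightarrow> real"
  assumes distr: "has_asymp_distr I (\<lambda>n i. complex_of_real (lam n i)) (\<lambda>y. complex_of_real (f y)) \<Omega>"
    and r: "r > 0"
  shows "(\<lambda>n. (\<Sum>i\<in>I n. trap lo hi r (lam n i)) / real (card (I n)))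
           \<longlonglongrightarrow> integral\<^sup>L lebesgue (\<lambda>x. indicator \<Omega> x * trap lo hi r (f x)) / measure lebesgue \<Omega>"
proof -
  define Fc where "Fc z = complex_of_real (trap lo hi r (Re z) * trap 0 0 1 (Im z))" for z
  have c1: "continuous_on UNIV (\<lambda>z::complex. trap lo hi r (Re z))"
    by (rule continuous_on_compose2[OF trap_cont[OF r] continuous_on_Re[OF continuous_on_id]]) auto
  have c2: "continuous_on UNIV (\<lambda>z::complex. trap 0 0 1 (Im z))"
    by (rule continuous_on_compose2[OF trap_cont continuous_on_Im[OF continuous_on_id]]) auto
  have cont: "continuous_on UNIV Fc" unfolding Fc_def
    by (intro continuous_on_of_real continuous_on_mult c1 c2)
  have bnd: "bounded {z. Fc z \<noteq> 0}"
  proof -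
    have "norm z \<le> \<bar>lo\<bar> + \<bar>hi\<bar> + r + 1" if "Fc z \<noteq> 0" for z
    proof -
      have t1: "trap lo hi r (Re z) \<noteq> 0" and t2: "trap 0 0 1 (Im z) \<noteq> 0" using that unfolding Fc_def by auto
      have "Re z \<in> {lo - r .. hi + r}" using trap_support[OF r, of lo hi] t1 by auto
      moreover have "Im z \<in> {0 - 1 .. 0 + 1}" using trap_support[of 1 0 0] t2 by auto
      ultimately have "\<bar>Re z\<bar> \<le> \<bar>lo\<bar> + \<bar>hi\<bar> + r" "\<bar>Im z\<bar> \<le> 1" using r by auto
      then show ?thesis using cmod_le[of z] by linarith
    qed
    then show ?thesis unfolding bounded_iff by blast
  qed
  have lim: "(\<lambda>n. (\<Sum>i\<in>I n. Fc (complex_of_real (lam n i))) / of_nat (card (I n)))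
     \<longlonglongrightarrow> set_lebesgue_integral lebesgue \<Omega> (\<lambda>x. Fc (complex_of_real (f x))) / of_real (measure lebesgue \<Omega>)"
    using distr cont bnd unfolding has_asymp_distr_def by blast
  have t01: "trap 0 0 1 0 = 1" by (rule trap_one) auto
  have e1: "(\<Sum>i\<in>I n. Fc (complex_of_real (lam n i))) / of_nat (card (I n))
      = complex_of_real ((\<Sum>i\<in>I n. trap lo hi r (lam n i)) / real (card (I n)))" for n
    unfolding Fc_def using t01 by simp
  have "set_lebesgue_integral lebesgue \<Omega> (\<lambda>x. Fc (complex_of_real (f x)))
      = integral\<^sup>L lebesgue (\<lambda>x. complex_of_real (indicator \<Omega> x * trap lo hi r (f x)))"
    unfolding set_lebesgue_integral_def Fc_def using t01 by (intro Bochner_Integration.integral_cong) (auto simp: indicator_def)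
  also have "\<dots> = complex_of_real (integral\<^sup>L lebesgue (\<lambda>x. indicator \<Omega> x * trap lo hi r (f x)))"
    by (rule integral_complex_of_real)
  finally have e2: "set_lebesgue_integral lebesgue \<Omega> (\<lambda>x. Fc (complex_of_real (f x))) / of_real (measure lebesgue \<Omega>)
     = complex_of_real (integral\<^sup>L lebesgue (\<lambda>x. indicator \<Omega> x * trap lo hi r (f x)) / measure lebesgue \<Omega>)"
    by simp
  from lim show ?thesis unfolding e1 e2 tendsto_of_real_iff .
qed

lemma sample_lim:
  fixes \<Omega> :: "(real^'d::finite) set" and f :: "real^'d \<Rightarrow> real" and F :: "real \<Rightarrow> real"
    and a b :: "real^'d" and N :: "nat \<Rightarrow> 'd \<Rightarrow> nat" and x :: "nat \<Rightarrow> ('d \<Rightarrow> nat) \<Rightarrow> real^'d"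
    and I :: "nat \<Rightarrow> ('d \<Rightarrow> nat) set"
  assumes ab: "\<And>k. a$k < b$k"
   and Ninf: "filterlim (\<lambda>n. Min (range (N n))) at_top sequentially"
   and grid: "au_grid x a b N"
   and I_def: "\<And>n. I n = {i \<in> multi_range (N n). x n i \<in> \<Omega>}"
   and fr: "frontier \<Omega> \<in> null_sets lebesgue"
   and fc: "AE y in lebesgue. y \<in> \<Omega> \<longrightarrow> continuous (at y within \<Omega>) f"
   and rect: "\<Omega> \<subseteq> cbox a b"
   and pos: "measure lebesgue \<Omega> > 0"
   and Fc: "continuous_on UNIV F" and Fb: "\<And>y. \<bar>F y\<bar> \<le> B"
  shows "(\<lambda>n. (\<Sum>i\<in>I n. F (f (x n i))) / real (card (I n)))
           \<longlonglongrightarrow> integral\<^sup>L lebesgue (\<lambda>y. indicator \<Omega> y * F (f y)) / measure lebesgue \<Omega>"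
proof -
  define C where "C = cbox a b"
  define V where "V = measure lebesgue C"
  have Vpos: "V > 0"
  proof -
    have "V = (\<Prod>k\<in>UNIV. b$k - a$k)" unfolding V_def C_def
      using ab by (intro measure_cbox_cart) (simp add: less_imp_le)
    also have "\<dots> > 0" using ab by (intro prod_pos) (simp add: algebra_simps)
    finally show ?thesis .
  qed
  define gF where "gF y = indicator \<Omega> y * F (f y)" for y
  define g1 where "g1 y = indicator \<Omega> y * (\<lambda>_. 1::real) (f y)" for y
  have cF: "AE y in lebesgue. isCont gF y" unfolding gF_def by (rule ae_cont_Omega[OF fr fc Fc])
  have c1: "AE y in lebesgue. isCont g1 y" unfolding g1_def by (rule ae_cont_Omega[OF fr fc]) simp
  have R1: "(\<lambda>n. (\<Sum>i\<in>multi_range (N n). gF (x n i)) / real (\<Prod>k\<in>UNIV. N n k))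
          \<longlonglongrightarrow> integral\<^sup>L lebesgue (\<lambda>y. indicator (cbox a b) y * gF y) / measure lebesgue (cbox a b)"
  proof (rule riemann[OF ab Ninf grid])
    show "gF \<in> borel_measurable lebesgue" by (rule ae_cont_measurable[OF cF])
    show "AE y in lebesgue. isCont gF y" by (rule cF)
    have B0: "0 \<le> B" using Fb[of 0] by linarith
    show "\<And>y. \<bar>gF y\<bar> \<le> B" unfolding gF_def using Fb B0 by (auto simp: indicator_def)
  qed
  have R2: "(\<lambda>n. (\<Sum>i\<in>multi_range (N n). g1 (x n i)) / real (\<Prod>k\<in>UNIV. N n k))
          \<longlonglongrightarrow> integral\<^sup>L lebesgue (\<lambda>y. indicator (cbox a b) y * g1 y) / measure lebesgue (cbox a b)"
  proof (rule riemann[OF ab Ninf grid])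
    show "g1 \<in> borel_measurable lebesgue" by (rule ae_cont_measurable[OF c1])
    show "AE y in lebesgue. isCont g1 y" by (rule c1)
    show "\<And>y. \<bar>g1 y\<bar> \<le> 1" unfolding g1_def by (auto simp: indicator_def)
  qed
  have eF: "integral\<^sup>L lebesgue (\<lambda>y. indicator (cbox a b) y * gF y) = integral\<^sup>L lebesgue (\<lambda>y. indicator \<Omega> y * F (f y))"
    unfolding gF_def using rect by (intro Bochner_Integration.integral_cong) (auto simp: indicator_def)
  have e1: "integral\<^sup>L lebesgue (\<lambda>y. indicator (cbox a b) y * g1 y) = measure lebesgue \<Omega>"
  proof -
    have "integral\<^sup>L lebesgue (\<lambda>y. indicator (cbox a b) y * g1 y) = integral\<^sup>L lebesgue (indicator \<Omega>)"
      unfolding g1_def using rect by (intro Bochner_Integration.integral_cong) (auto simp: indicator_def)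
    also have "\<dots> = measure lebesgue \<Omega>" by simp
    finally show ?thesis .
  qed
  have lim: "(\<lambda>n. ((\<Sum>i\<in>multi_range (N n). gF (x n i)) / real (\<Prod>k\<in>UNIV. N n k)) /
                  ((\<Sum>i\<in>multi_range (N n). g1 (x n i)) / real (\<Prod>k\<in>UNIV. N n k)))
       \<longlonglongrightarrow> (integral\<^sup>L lebesgue (\<lambda>y. indicator \<Omega> y * F (f y)) / V) / (measure lebesgue \<Omega> / V)"
    using tendsto_divide[OF R1 R2] pos Vpos unfolding eF e1 V_def C_def by simp
  have limeq: "(integral\<^sup>L lebesgue (\<lambda>y. indicator \<Omega> y * F (f y)) / V) / (measure lebesgue \<Omega> / V)
      = integral\<^sup>L lebesgue (\<lambda>y. indicator \<Omega> y * F (f y)) / measure lebesgue \<Omega>"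
    using Vpos by simp
  have Min_le: "Min (range (N n)) \<le> N n k" for n k by (intro Min_le) auto
  have ev: "eventually (\<lambda>n. ((\<Sum>i\<in>multi_range (N n). gF (x n i)) / real (\<Prod>k\<in>UNIV. N n k)) /
                  ((\<Sum>i\<in>multi_range (N n). g1 (x n i)) / real (\<Prod>k\<in>UNIV. N n k))
           = (\<Sum>i\<in>I n. F (f (x n i))) / real (card (I n))) sequentially"
  proof -
    have "eventually (\<lambda>n. Min (range (N n)) \<ge> 1) sequentially"
      using Ninf by (simp add: filterlim_at_top)
    then show ?thesis
    proof eventually_elim
      case (elim n)
      have "N n k \<ge> 1" for k using elim Min_le[of n k] by linarith
      then have Pp: "real (\<Prod>k\<in>UNIV. N n k) > 0" by (simp add: prod_pos Suc_le_eq)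
      have s1: "(\<Sum>i\<in>multi_range (N n). gF (x n i)) = (\<Sum>i\<in>I n. F (f (x n i)))"
      proof -
        have "(\<Sum>i\<in>I n. F (f (x n i))) = (\<Sum>i\<in>multi_range (N n). if x n i \<in> \<Omega> then F (f (x n i)) else 0)"
          unfolding I_def by (rule sum.inter_filter[OF finite_multi_range])
        also have "\<dots> = (\<Sum>i\<in>multi_range (N n). gF (x n i))"
          unfolding gF_def by (intro sum.cong) (auto simp: indicator_def)
        finally show ?thesis by simp
      qed
      have s2: "(\<Sum>i\<in>multi_range (N n). g1 (x n i)) = real (card (I n))"
      proof -
        have "real (card (I n)) = (\<Sum>i\<in>multi_range (N n). if x n i \<in> \<Omega> then 1 else 0)"
          unfolding I_def by (rule card_filter_sum[OF finite_multi_range])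
        also have "\<dots> = (\<Sum>i\<in>multi_range (N n). g1 (x n i))"
          unfolding g1_def by (intro sum.cong) (auto simp: indicator_def)
        finally show ?thesis by simp
      qed
      have dd: "(A / P) / (B / P) = A / B" if "P \<noteq> 0" for A B P :: real
        using that by (cases "B = 0") (simp_all add: field_simps)
      have "real (\<Prod>k\<in>UNIV. N n k) \<noteq> 0" using Pp by linarith
      then show ?case unfolding s1 s2 by (rule dd)
    qed
  qed
  show ?thesis using Lim_transform_eventually[OF lim ev] unfolding limeq .
qed

lemma gap_lemma:
  fixes \<Omega> :: "'a::euclidean_space set" and f :: "'a \<Rightarrow> real"
  assumes Om: "\<Omega> \<in> sets lebesgue" and finO: "emeasure lebesgue \<Omega> < \<infinity>"
    and pos: "measure lebesgue \<Omega> > 0"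
    and fm: "\<And>lo hi r. r > 0 \<Longrightarrow> (\<lambda>z. indicator \<Omega> z * trap lo hi r (f z)) \<in> borel_measurable lebesgue"
    and ER: "c \<in> ess_range \<Omega> f"
    and \<delta>: "0 < \<delta>" and t: "lo \<le> t" and c: "c = t + 3*\<delta>/8"
  shows "integral\<^sup>L lebesgue (\<lambda>x. indicator \<Omega> x * trap lo t (\<delta>/2) (f x)) / measure lebesgue \<Omega>
       < integral\<^sup>L lebesgue (\<lambda>x. indicator \<Omega> x * trap lo (t+\<delta>/2) (\<delta>/2) (f x)) / measure lebesgue \<Omega>"
proof -
  define E where "E = {x \<in> \<Omega>. \<bar>f x - c\<bar> < \<delta>/8}"
  have Epos: "emeasure lebesgue E > 0"
  proof -
    have "\<forall>e>0. emeasure lebesgue {x \<in> \<Omega>. \<bar>f x - c\<bar> < e} > 0" using ER unfolding ess_range_def by simp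
    moreover have "\<delta>/8 > 0" using \<delta> by simp
    ultimately show ?thesis unfolding E_def by blast
  qed
  have Em: "E \<in> sets lebesgue"
  proof (rule ccontr)
    assume "E \<notin> sets lebesgue"
    then have "emeasure lebesgue E = 0" by (rule emeasure_notin_sets)
    then show False using Epos by simp
  qed
  have EO: "E \<subseteq> \<Omega>" unfolding E_def by auto
  have finE: "emeasure lebesgue E < \<infinity>" using emeasure_mono[OF EO Om] finO by (meson le_less_trans)
  have mE: "measure lebesgue E > 0"
  proof -
    have "emeasure lebesgue E = ennreal (measure lebesgue E)"
      using finE by (intro emeasure_eq_ennreal_measure) simp
    then show ?thesis using Epos by simp
  qed
  define F1 where "F1 = trap lo t (\<delta>/2)"
  define F2 where "F2 = trap lo (t+\<delta>/2) (\<delta>/2)"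
  have h2: "\<delta>/2 > 0" using \<delta> by simp
  have intO: "integrable lebesgue (indicator \<Omega> :: 'a \<Rightarrow> real)" using Om finO by simp
  have int: "integrable lebesgue (\<lambda>x. indicator \<Omega> x * trap lo' hi' (\<delta>/2) (f x))" for lo' hi'
  proof (rule Bochner_Integration.integrable_bound[OF intO])
    show "(\<lambda>x. indicator \<Omega> x * trap lo' hi' (\<delta>/2) (f x)) \<in> borel_measurable lebesgue" using fm h2 by blast
    show "AE x in lebesgue. norm (indicator \<Omega> x * trap lo' hi' (\<delta>/2) (f x)) \<le> norm (indicator \<Omega> x :: real)"
      by (rule AE_I2) (auto simp: indicator_def trap_bounds abs_le_iff intro: order_trans[OF trap_bounds(1)])
  qed
  have intE: "integrable lebesgue (\<lambda>x. 1/2 * indicator E x :: real)" using Em finE by simp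
  have pw: "1/2 * indicator E x \<le> indicator \<Omega> x * F2 (f x) - indicator \<Omega> x * F1 (f x)" for x
  proof (cases "x \<in> E")
    case True
    then have xO: "x \<in> \<Omega>" and fx: "\<bar>f x - c\<bar> < \<delta>/8" unfolding E_def by auto
    have "t + (\<delta>/2)/2 \<le> f x" "f x \<le> t + \<delta>/2" using fx unfolding c by linarith+
    then have "F1 (f x) + 1/2 \<le> F2 (f x)" unfolding F1_def F2_def
      by (rule trap_gap[OF h2 t])
    then show ?thesis using True xO by simp
  next
    case False
    have "F1 (f x) \<le> F2 (f x)" unfolding F1_def F2_def using trap_mono_hi[OF h2] \<delta> by simp
    then show ?thesis using False by (simp add: indicator_def)
  qed
  have "integral\<^sup>L lebesgue (\<lambda>x. 1/2 * indicator E x :: real)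
     \<le> integral\<^sup>L lebesgue (\<lambda>x. indicator \<Omega> x * F2 (f x) - indicator \<Omega> x * F1 (f x))"
    using intE int pw unfolding F1_def F2_def by (intro integral_mono) auto
  also have "\<dots> = integral\<^sup>L lebesgue (\<lambda>x. indicator \<Omega> x * F2 (f x)) - integral\<^sup>L lebesgue (\<lambda>x. indicator \<Omega> x * F1 (f x))"
    using int unfolding F1_def F2_def by (intro Bochner_Integration.integral_diff) auto
  finally have ge: "1/2 * measure lebesgue E \<le> integral\<^sup>L lebesgue (\<lambda>x. indicator \<Omega> x * F2 (f x)) - integral\<^sup>L lebesgue (\<lambda>x. indicator \<Omega> x * F1 (f x))"
    by simp
  then have "integral\<^sup>L lebesgue (\<lambda>x. indicator \<Omega> x * F1 (f x)) < integral\<^sup>L lebesgue (\<lambda>x. indicator \<Omega> x * F2 (f x))"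
    using mE by linarith
  then show ?thesis unfolding F1_def F2_def using pos by (intro divide_strict_right_mono)
qed

theorem theorem2p1:
  fixes \<Omega> :: "(real^('d::{finite,wellorder})) set"
    and f :: "real^('d::{finite,wellorder}) \<Rightarrow> real"
    and a b :: "real^('d::{finite,wellorder})"
    and N :: "nat \<Rightarrow> (('d::{finite,wellorder}) \<Rightarrow> nat)"
    and x :: "nat \<Rightarrow> (('d::{finite,wellorder}) \<Rightarrow> nat) \<Rightarrow> real^('d::{finite,wellorder})"
    and lam :: "nat \<Rightarrow> (('d::{finite,wellorder}) \<Rightarrow> nat) \<Rightarrow> real"
    and I :: "nat \<Rightarrow> (('d::{finite,wellorder}) \<Rightarrow> nat) set"
  assumes regular: "bounded \<Omega>" "frontier \<Omega> \<in> null_sets lebesgue"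
    and pos: "measure lebesgue \<Omega> > 0"
    and f_bdd: "bounded (f ` \<Omega>)"
    and f_cont: "AE y in lebesgue. y \<in> \<Omega> \<longrightarrow> continuous (at y within \<Omega>) f"
    and f_ER: "ess_range \<Omega> f = {Inf (f ` \<Omega>) .. Sup (f ` \<Omega>)}"
    and rect: "\<Omega> \<subseteq> cbox a b"
    and N_inf: "filterlim (\<lambda>n. Min (range (N n))) at_top sequentially"
    and grid: "au_grid x a b N"
    and I_def: "\<And>n. I n = {i \<in> multi_range (N n). x n i \<in> \<Omega>}"
    and distr: "has_asymp_distr I (\<lambda>n i. complex_of_real (lam n i)) (\<lambda>y. complex_of_real (f y)) \<Omega>"
    and eps: "\<exists>\<epsilon> :: nat \<Rightarrow> real. \<epsilon> \<longlonglongrightarrow> 0 \<and>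
               (\<forall>n. \<forall>i\<in>I n. lam n i \<in> {Inf (f ` \<Omega>) - \<epsilon> n .. Sup (f ` \<Omega>) + \<epsilon> n})"
  shows "(\<forall>\<sigma> \<tau>. (\<forall>n. \<sigma> n permutes I n \<and> \<tau> n permutes I n \<and>
              (\<forall>i\<in>I n. \<forall>j\<in>I n. lex_less i j \<longrightarrow>
                  f (x n (\<sigma> n i)) \<le> f (x n (\<sigma> n j)) \<and> lam n (\<tau> n i) \<le> lam n (\<tau> n j)))
           \<longrightarrow> (\<lambda>n. Max {\<bar>f (x n (\<sigma> n i)) - lam n (\<tau> n i)\<bar> | i. i \<in> I n}) \<longlonglongrightarrow> 0)
       \<and> (\<lambda>n. Min {Max {\<bar>f (x n i) - lam n (\<tau> i)\<bar> | i. i \<in> I n} | \<tau>. \<tau> permutes I n})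
           \<longlonglongrightarrow> 0"
proof -
  obtain \<epsilon> where eps0: "\<epsilon> \<longlonglongrightarrow> 0"
    and epsb: "\<forall>n. \<forall>i\<in>I n. lam n i \<in> {Inf (f ` \<Omega>) - \<epsilon> n .. Sup (f ` \<Omega>) + \<epsilon> n}"
    using eps by blast
  define m where "m = Inf (f ` \<Omega>)"
  define M where "M = Sup (f ` \<Omega>)"
  define e' where "e' n = \<bar>\<epsilon> n\<bar>" for n
  have e'0: "e' \<longlonglongrightarrow> 0" unfolding e'_def using eps0 by (rule tendsto_rabs_zero)
  have fin: "\<And>n. finite (I n)" and crd: "filterlim (\<lambda>n. card (I n)) at_top sequentially"
    using distr unfolding has_asymp_distr_def by auto
  have Om: "\<Omega> \<in> sets lebesgue"
  proof -
    have "\<Omega> - interior \<Omega> \<subseteq> frontier \<Omega>" unfolding frontier_def using closure_subset by blast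
    then have n1: "\<Omega> - interior \<Omega> \<in> null_sets lebesgue"
      using regular(2) by (meson negligible_iff_null_sets negligible_subset)
    have i1: "interior \<Omega> \<in> sets lebesgue"
      by (metis borel_open open_interior sets_completionI_sets sets_lborel)
    have "interior \<Omega> \<union> (\<Omega> - interior \<Omega>) \<in> sets lebesgue" using n1 i1 by (intro sets.Un) auto
    moreover have "interior \<Omega> \<union> (\<Omega> - interior \<Omega>) = \<Omega>" using interior_subset by blast
    ultimately show ?thesis by simp
  qed
  have Cfin: "emeasure lebesgue (cbox a b) < \<infinity>" using emeasure_lborel_cbox_finite[of a b] by simp
  have finO: "emeasure lebesgue \<Omega> < \<infinity>"
  proof -
    have "cbox a b \<in> sets lebesgue" by simp
    then show ?thesis using emeasure_mono[OF rect] Cfin by (meson le_less_trans)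
  qed
  have ne: "\<Omega> \<noteq> {}" using pos by auto
  obtain Bf where Bf: "\<And>z. z \<in> \<Omega> \<Longrightarrow> \<bar>f z\<bar> \<le> Bf" using f_bdd unfolding bounded_real by auto
  have bb1: "bdd_below (f ` \<Omega>)" unfolding bdd_below_def
    by (intro exI[of _ "-Bf"]) (auto dest: Bf simp: abs_le_iff)
  have bb2: "bdd_above (f ` \<Omega>)" unfolding bdd_above_def
    by (intro exI[of _ "Bf"]) (auto dest: Bf simp: abs_le_iff)
  note bb = bb1 bb2
  have mM: "m \<le> f z \<and> f z \<le> M" if "z \<in> \<Omega>" for z
    unfolding m_def M_def using bb that by (auto intro: cInf_lower cSup_upper)
  have ab: "a$k < b$k" for k
  proof (rule ccontr)
    assume nk: "\<not> a$k < b$k"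
    have "measure lebesgue (cbox a b) = 0"
    proof (cases "cbox a b = {}")
      case True then show ?thesis by simp
    next
      case False
      then have le: "\<And>k. a$k \<le> b$k" by (simp add: interval_ne_empty_cart)
      then have "a$k = b$k" using nk by (meson antisym not_less)
      then have "(\<Prod>k\<in>UNIV. b$k - a$k) = 0" by (intro prod_zero) (simp, rule bexI[of _ k], simp_all)
      then show ?thesis using measure_cbox_cart[OF le] by simp
    qed
    moreover have "measure lebesgue \<Omega> \<le> measure lebesgue (cbox a b)"
      using rect Om Cfin by (intro measure_mono_fmeasurable) (auto simp: fmeasurable_def)
    ultimately show False using pos by simp
  qed
  have fm: "(\<lambda>z. indicator \<Omega> z * trap lo hi r (f z)) \<in> borel_measurable lebesgue" if "r > 0" for lo hi r
    by (rule ae_cont_measurable[OF ae_cont_Omega[OF regular(2) f_cont trap_cont[OF that]]])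
  define L where "L F = integral\<^sup>L lebesgue (\<lambda>x. indicator \<Omega> x * F (f x)) / measure lebesgue \<Omega>" for F
  have gap: "L (trap (m-2) t (\<delta>/2)) < L (trap (m-2) (t+\<delta>/2) (\<delta>/2))"
    if "0 < \<delta>" "\<delta> \<le> 1" "m \<le> t + 3*\<delta>/8" "t + 3*\<delta>/8 \<le> M" for t \<delta>
  proof -
    have ER: "t + 3*\<delta>/8 \<in> ess_range \<Omega> f" unfolding f_ER using that unfolding m_def M_def by simp
    have tl: "m - 2 \<le> t" using that by linarith
    have fm': "\<And>lo hi r. r > 0 \<Longrightarrow> (\<lambda>z. indicator \<Omega> z * trap lo hi r (f z)) \<in> borel_measurable lebesgue"
      by (rule fm)
    show ?thesis unfolding L_def
      by (rule gap_lemma[OF Om finO pos fm' ER that(1) tl refl])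
  qed
  have limS: "(\<lambda>n. (\<Sum>i\<in>I n. trap lo hi r (f (x n i))) / real (card (I n))) \<longlonglongrightarrow> L (trap lo hi r)"
    if "r > 0" for lo hi r
    unfolding L_def
    by (rule sample_lim[OF ab N_inf grid I_def regular(2) f_cont rect pos trap_cont[OF that]])
       (use trap_bounds in \<open>auto simp: abs_le_iff intro: order_trans[OF _ trap_bounds(2)]\<close>)
  have limL: "(\<lambda>n. (\<Sum>i\<in>I n. trap lo hi r (lam n i)) / real (card (I n))) \<longlonglongrightarrow> L (trap lo hi r)"
    if "r > 0" for lo hi r
    unfolding L_def by (rule lam_lim[OF distr that])
  have first: "\<forall>\<sigma> \<tau>. (\<forall>n. \<sigma> n permutes I n \<and> \<tau> n permutes I n \<and>
              (\<forall>i\<in>I n. \<forall>j\<in>I n. lex_less i j \<longrightarrow>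
                  f (x n (\<sigma> n i)) \<le> f (x n (\<sigma> n j)) \<and> lam n (\<tau> n i) \<le> lam n (\<tau> n j)))
           \<longrightarrow> (\<lambda>n. Max {\<bar>f (x n (\<sigma> n i)) - lam n (\<tau> n i)\<bar> | i. i \<in> I n}) \<longlonglongrightarrow> 0"
  proof (intro allI impI)
    fix \<sigma> \<tau>
    assume H: "\<forall>n. \<sigma> n permutes I n \<and> \<tau> n permutes I n \<and>
              (\<forall>i\<in>I n. \<forall>j\<in>I n. lex_less i j \<longrightarrow>
                  f (x n (\<sigma> n i)) \<le> f (x n (\<sigma> n j)) \<and> lam n (\<tau> n i) \<le> lam n (\<tau> n j))"
    have ps: "\<sigma> n permutes I n" "\<tau> n permutes I n" for n using H by auto
    show "(\<lambda>n. Max {\<bar>f (x n (\<sigma> n i)) - lam n (\<tau> n i)\<bar> | i. i \<in> I n}) \<longlonglongrightarrow> 0"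
    proof (rule sorted_match[where R=lex_less and \<epsilon>=e' and m=m and M=M and L=L])
      show "\<And>n. finite (I n)" by (rule fin)
      show "filterlim (\<lambda>n. card (I n)) at_top sequentially" by (rule crd)
      show "\<And>i. \<not> lex_less i i" by (rule lex_less_irrefl)
      show "\<And>n i j. i \<in> I n \<Longrightarrow> j \<in> I n \<Longrightarrow> i \<noteq> j \<Longrightarrow> lex_less i j \<or> lex_less j i"
        by (rule lex_less_total)
      show "\<And>n i j. i \<in> I n \<Longrightarrow> j \<in> I n \<Longrightarrow> lex_less i j \<Longrightarrow> f (x n (\<sigma> n i)) \<le> f (x n (\<sigma> n j))"
        using H by blast
      show "\<And>n i j. i \<in> I n \<Longrightarrow> j \<in> I n \<Longrightarrow> lex_less i j \<Longrightarrow> lam n (\<tau> n i) \<le> lam n (\<tau> n j)"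
        using H by blast
      show "e' \<longlonglongrightarrow> 0" by (rule e'0)
      show "m - e' n \<le> f (x n (\<sigma> n i)) \<and> f (x n (\<sigma> n i)) \<le> M + e' n" if "i \<in> I n" for n i
      proof -
        have "\<sigma> n i \<in> I n" using permutes_in_image[OF ps(1)] that by simp
        then have "x n (\<sigma> n i) \<in> \<Omega>" unfolding I_def by simp
        then show ?thesis using mM[of "x n (\<sigma> n i)"] unfolding e'_def by force
      qed
      show "m - e' n \<le> lam n (\<tau> n i) \<and> lam n (\<tau> n i) \<le> M + e' n" if "i \<in> I n" for n i
      proof -
        have "\<tau> n i \<in> I n" using permutes_in_image[OF ps(2)] that by simp
        then show ?thesis using epsb unfolding e'_def m_def M_def by force
      qed
      show "(\<lambda>n. (\<Sum>i\<in>I n. trap lo hi r (f (x n (\<sigma> n i)))) / real (card (I n))) \<longlonglongrightarrow> L (trap lo hi r)"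
        if "r > 0" for lo hi r
      proof -
        have "(\<Sum>i\<in>I n. trap lo hi r (f (x n (\<sigma> n i)))) = (\<Sum>i\<in>I n. trap lo hi r (f (x n i)))" for n
          using sum.permute[OF ps(1), of "\<lambda>i. trap lo hi r (f (x n i))"] by (simp add: o_def)
        then show ?thesis using limS[OF that] by simp
      qed
      show "(\<lambda>n. (\<Sum>i\<in>I n. trap lo hi r (lam n (\<tau> n i))) / real (card (I n))) \<longlonglongrightarrow> L (trap lo hi r)"
        if "r > 0" for lo hi r
      proof -
        have "(\<Sum>i\<in>I n. trap lo hi r (lam n (\<tau> n i))) = (\<Sum>i\<in>I n. trap lo hi r (lam n i))" for n
          using sum.permute[OF ps(2), of "\<lambda>i. trap lo hi r (lam n i)"] by (simp add: o_def)
        then show ?thesis using limL[OF that] by simp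
      qed
      show "L (trap (m-2) t (\<delta>/2)) < L (trap (m-2) (t+\<delta>/2) (\<delta>/2))"
        if "0 < \<delta>" "\<delta> \<le> 1" "m \<le> t + 3*\<delta>/8" "t + 3*\<delta>/8 \<le> M" for t \<delta>
        using gap[OF that] .
    qed
  qed
  have exs: "\<exists>s. s permutes I n \<and> (\<forall>i\<in>I n. \<forall>j\<in>I n. lex_less i j \<longrightarrow> w (s i) \<le> w (s j))"
    for n and w :: "('d \<Rightarrow> nat) \<Rightarrow> real"
  proof (rule sorting_exists[OF fin])
    show "\<And>i j k. lex_less i j \<Longrightarrow> lex_less j k \<Longrightarrow> lex_less i k" by (rule lex_less_trans)
    show "\<And>i. \<not> lex_less i i" by (rule lex_less_irrefl)
    show "\<And>i j. i \<in> I n \<Longrightarrow> j \<in> I n \<Longrightarrow> i \<noteq> j \<Longrightarrow> lex_less i j \<or> lex_less j i"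
      by (rule lex_less_total)
  qed
  obtain \<sigma>0 where s0: "\<forall>n. \<sigma>0 n permutes I n \<and> (\<forall>i\<in>I n. \<forall>j\<in>I n. lex_less i j \<longrightarrow> f (x n (\<sigma>0 n i)) \<le> f (x n (\<sigma>0 n j)))"
  proof -
    have "\<forall>n. \<exists>s. s permutes I n \<and> (\<forall>i\<in>I n. \<forall>j\<in>I n. lex_less i j \<longrightarrow> f (x n (s i)) \<le> f (x n (s j)))"
      using exs[where w="\<lambda>i. f (x _ i)"] by blast
    then show ?thesis using that by (metis (no_types, lifting) choice)
  qed
  obtain \<tau>0 where t0: "\<forall>n. \<tau>0 n permutes I n \<and> (\<forall>i\<in>I n. \<forall>j\<in>I n. lex_less i j \<longrightarrow> lam n (\<tau>0 n i) \<le> lam n (\<tau>0 n j))"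
  proof -
    have "\<forall>n. \<exists>s. s permutes I n \<and> (\<forall>i\<in>I n. \<forall>j\<in>I n. lex_less i j \<longrightarrow> lam n (s i) \<le> lam n (s j))"
      using exs[where w="lam _"] by blast
    then show ?thesis using that by (metis (no_types, lifting) choice)
  qed
  define Mx where "Mx n = Max {\<bar>f (x n (\<sigma>0 n i)) - lam n (\<tau>0 n i)\<bar> | i. i \<in> I n}" for n
  have Mx0: "Mx \<longlonglongrightarrow> 0" unfolding Mx_def using first s0 t0 by blast
  define Mn where "Mn n = Min {Max {\<bar>f (x n i) - lam n (\<tau> i)\<bar> | i. i \<in> I n} | \<tau>. \<tau> permutes I n}" for n
  have evne: "eventually (\<lambda>n. I n \<noteq> {}) sequentially"
  proof -
    have "eventually (\<lambda>n. card (I n) \<ge> 1) sequentially" using crd by (simp add: filterlim_at_top)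
    then show ?thesis by eventually_elim auto
  qed
  have bnds: "eventually (\<lambda>n. 0 \<le> Mn n \<and> Mn n \<le> Mx n) sequentially"
    using evne
  proof eventually_elim
    case (elim n)
    define Sp where "Sp \<pi> = {\<bar>f (x n i) - lam n (\<pi> i)\<bar> | i. i \<in> I n}" for \<pi>
    have Spf: "finite (Sp \<pi>)" "Sp \<pi> \<noteq> {}" for \<pi> unfolding Sp_def using fin[of n] elim by auto
    have Spnn: "0 \<le> Max (Sp \<pi>)" for \<pi>
    proof -
      obtain i where "i \<in> I n" using elim by auto
      then have "\<bar>f (x n i) - lam n (\<pi> i)\<bar> \<in> Sp \<pi>" unfolding Sp_def by auto
      then have "\<bar>f (x n i) - lam n (\<pi> i)\<bar> \<le> Max (Sp \<pi>)" using Spf by (intro Max_ge) auto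
      then show ?thesis by linarith
    qed
    define T where "T = (\<lambda>\<pi>. Max (Sp \<pi>)) ` {\<pi>. \<pi> permutes I n}"
    have TMn: "Mn n = Min T" unfolding Mn_def T_def Sp_def by (rule arg_cong[where f=Min]) blast
    have Tf: "finite T" unfolding T_def using finite_permutations[OF fin[of n]] by simp
    have Tne: "T \<noteq> {}" unfolding T_def using permutes_id by blast
    have "Min T \<in> T" using Tf Tne by (rule Min_in)
    then have low: "0 \<le> Min T" unfolding T_def using Spnn by auto
    define \<pi>0 where "\<pi>0 = \<tau>0 n \<circ> inv (\<sigma>0 n)"
    have sp: "\<sigma>0 n permutes I n" and tp: "\<tau>0 n permutes I n" using s0 t0 by auto
    have p0: "\<pi>0 permutes I n" unfolding \<pi>0_def by (intro permutes_compose permutes_inv sp tp)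
    have "Sp \<pi>0 = {\<bar>f (x n (\<sigma>0 n i)) - lam n (\<tau>0 n i)\<bar> | i. i \<in> I n}"
    proof (intro equalityI subsetI)
      fix v assume "v \<in> Sp \<pi>0"
      then obtain i where i: "i \<in> I n" "v = \<bar>f (x n i) - lam n (\<pi>0 i)\<bar>" unfolding Sp_def by auto
      define j where "j = inv (\<sigma>0 n) i"
      have j: "j \<in> I n" unfolding j_def using permutes_in_image[OF permutes_inv[OF sp]] i(1) by simp
      have "\<sigma>0 n j = i" unfolding j_def using permutes_inverses(1)[OF sp] by simp
      then have "v = \<bar>f (x n (\<sigma>0 n j)) - lam n (\<tau>0 n j)\<bar>" using i(2) unfolding \<pi>0_def j_def by simp
      then show "v \<in> {\<bar>f (x n (\<sigma>0 n i)) - lam n (\<tau>0 n i)\<bar> | i. i \<in> I n}" using j by auto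
    next
      fix v assume "v \<in> {\<bar>f (x n (\<sigma>0 n i)) - lam n (\<tau>0 n i)\<bar> | i. i \<in> I n}"
      then obtain j where j: "j \<in> I n" "v = \<bar>f (x n (\<sigma>0 n j)) - lam n (\<tau>0 n j)\<bar>" by auto
      define i where "i = \<sigma>0 n j"
      have i: "i \<in> I n" unfolding i_def using permutes_in_image[OF sp] j(1) by simp
      have "\<pi>0 i = \<tau>0 n j" unfolding \<pi>0_def i_def using permutes_inverses(2)[OF sp] by simp
      then have "v = \<bar>f (x n i) - lam n (\<pi>0 i)\<bar>" using j(2) unfolding i_def by simp
      then show "v \<in> Sp \<pi>0" unfolding Sp_def using i by auto
    qed
    then have "Max (Sp \<pi>0) = Mx n" unfolding Mx_def by simp
    moreover have "Max (Sp \<pi>0) \<in> T" unfolding T_def using p0 by blast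
    ultimately have "Min T \<le> Mx n" using Tf by (metis Min_le)
    then show ?case using low TMn by simp
  qed
  have "Mn \<longlonglongrightarrow> 0"
  proof (rule tendsto_sandwich[OF _ _ tendsto_const Mx0])
    show "eventually (\<lambda>n. 0 \<le> Mn n) sequentially" using bnds by eventually_elim auto
    show "eventually (\<lambda>n. Mn n \<le> Mx n) sequentially" using bnds by eventually_elim auto
  qed
  then show ?thesis using first unfolding Mn_def by blast
qed

end
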